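(* Let $B(z,\sigma)=\bar B(|z|,\cos\theta)$ be a collision kernel as in the context, with $b$ satisfying (H0) (i.e. $A_2<\infty$). Then: (I) For every $\varphi\in C^2(\mathbb R^N)$ the function $(v,v_* )\mapsto L_B[\Delta\varphi](v,v_* )$ is continuous on $\mathbb R^N\times\mathbb R^N$. (II) Let $B_n(z,\sigma)=\bar B_n(|z|,\cos\theta)$ where $\bar B_n\ge0$ are Borel, $r\mapsto\bar B_n(r,t)$ is continuous on $[0,\infty)$ for each $t\in(-1,1)$, and $\bar B_n(r,t)\nearrow\bar B(r,t)$ as $n\to\infty$ for all $(r,t)\in[0,\infty)\times(-1,1)$. Then for every $\varphi\in C^2(\mathbb R^N)$ and every $0<R<\infty$, $$\sup_{|v|+|v_*|\le R}\big|L_{B_n}[\Delta\varphi](v,v_* )-L_B[\Delta\varphi](v,v_* )\big|\to0\quad(n\to\infty).$$ Moreover, if $\varphi_n\in C^2(\mathbb R^N)$ satisfy $\varphi_n(v)\to\varphi(v)$ for all $v$ and $\sup_n\sup_{|v|\le R}\sum_{|\alpha|\le2}|\partial^\alpha\varphi_n(v)|<\infty$ for all $R<\infty$, then $L_{B_n}[\Delta\varphi_n](v,v_* )\to L_B[\Delta\varphi](v,v_* )$ for all $(v,v_* )\in\mathbb R^N\times\mathbb R^N$.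
   Context: Let $N\ge2$. For $v,v_*\in\mathbb R^N$, $\sigma\in\mathbb S^{N-1}$: $v'=\frac{v+v_*}{2}+\frac{|v-v_*|}{2}\sigma$, $v_*'=\frac{v+v_*}{2}-\frac{|v-v_*|}{2}\sigma$; $\mathbf n=(v-v_* )/|v-v_*|$ ($\mathbf n=\mathbf e_1$ if $v=v_*$), $\cos\theta=\mathbf n\cdot\sigma$. The kernel is $B(z,\sigma)=\bar B(|z|,\cos\theta)$ with $\bar B\ge0$ Borel on $[0,\infty)\times[-1,1]$, $r\mapsto\bar B(r,t)$ continuous on $[0,\infty)$ for every $t\in(-1,1)$, and $\bar B(r,t)\le(1+r^2)^{\gamma/2}b(t)$ with $0<\gamma\le2$, $b\ge0$ Borel. (H0): $A_2:=|\mathbb S^{N-2}|\int_0^\pi b(\cos\theta)\sin^N\theta\,d\theta<\infty$ ($|\mathbb S^{N-2}|$ the surface measure of unit sphere of $\mathbb R^{N-1}$, $=2$ if $N=2$). For $\mathbf n\in\mathbb S^{N-1}$, $\mathbb S^{N-2}(\mathbf n)=\{\omega\in\mathbb S^{N-1}:\omega\cdot\mathbf n=0\}$ with surface measure $d\omega$ (two points with counting measure if $N=2$). $\Delta\varphi=\varphi(v')+\varphi(v_*')-\varphi(v)-\varphi(v_* )$ with $\sigma=\cos\theta\,\mathbf n+\sin\theta\,\omega$, and $L_B[\Delta\varphi](v,v_* )=\int_0^\pi\bar B(|v-v_*|,\cos\theta)\sin^{N-2}\theta(\int_{\mathbb S^{N-2}(\mathbf n)}\Delta\varphi\,d\omega)d\theta$;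 $L_{B_n}$ is defined the same way with $\bar B_n$. *)

theory Defs
  imports "HOL-Analysis.Analysis"
begin

text \<open>Dimension N = DIM('a) for a Euclidean space 'a.\<close>

definition proj_perp :: "'a::euclidean_space \<Rightarrow> 'a \<Rightarrow> 'a" where
  "proj_perp u x = x - (x \<bullet> u) *\<^sub>R u"

text \<open>Surface measure on the (N-2)-sphere S^{N-2}(u) = {w in S^{N-1}. w . u = 0}
  (for N = 2: counting measure on two points), defined as the cone measure:
  the measure of E is (N-1) times the (N-1)-dimensional Lebesgue measure of the unit
  cone over E inside the hyperplane u-perp; the latter is realised as the N-dimensional
  Lebesgue measure of that cone thickened by a slab of width 1 in direction u.\<close>
definition perp_sphere_measure :: "'a::euclidean_space \<Rightarrow> 'a measure" where
  "perp_sphere_measure u =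
     scale_measure (of_nat (DIM('a) - 1))
       (distr (restrict_space lborel
                 {x. 0 < norm (proj_perp u x) \<and> norm (proj_perp u x) \<le> 1 \<and> \<bar>x \<bullet> u\<bar> \<le> 1/2})
              borel (\<lambda>x. proj_perp u x /\<^sub>R norm (proj_perp u x)))"

definition coll_dir :: "'a::euclidean_space \<Rightarrow> 'a \<Rightarrow> 'a" where
  "coll_dir v vs = (if v = vs then (SOME e. e \<in> Basis) else (v - vs) /\<^sub>R norm (v - vs))"

definition Delta_phi :: "('a::euclidean_space \<Rightarrow> real) \<Rightarrow> 'a \<Rightarrow> 'a \<Rightarrow> real \<Rightarrow> 'a \<Rightarrow> real" where
  "Delta_phi phi v vs \<theta> \<omega> =
     (let \<sigma> = cos \<theta> *\<^sub>R coll_dir v vs + sin \<theta> *\<^sub>R \<omega>;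
          v' = (1/2) *\<^sub>R (v + vs) + (norm (v - vs) / 2) *\<^sub>R \<sigma>;
          vs' = (1/2) *\<^sub>R (v + vs) - (norm (v - vs) / 2) *\<^sub>R \<sigma>
      in phi v' + phi vs' - phi v - phi vs)"

definition L_op :: "(real \<Rightarrow> real \<Rightarrow> real) \<Rightarrow> ('a::euclidean_space \<Rightarrow> real) \<Rightarrow> 'a \<Rightarrow> 'a \<Rightarrow> real" where
  "L_op Bb phi v vs =
     set_lebesgue_integral lborel {0..pi}
       (\<lambda>\<theta>. Bb (norm (v - vs)) (cos \<theta>) * sin \<theta> ^ (DIM('a) - 2) *
              (\<integral>\<omega>. Delta_phi phi v vs \<theta> \<omega> \<partial>(perp_sphere_measure (coll_dir v vs))))"

definition C2_with :: "('a::euclidean_space \<Rightarrow> real) \<Rightarrow> ('a \<Rightarrow> 'a \<Rightarrow>\<^sub>L real)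
                        \<Rightarrow> ('a \<Rightarrow> 'a \<Rightarrow>\<^sub>L 'a \<Rightarrow>\<^sub>L real) \<Rightarrow> bool" where
  "C2_with phi D D2 \<longleftrightarrow>
     (\<forall>x. (phi has_derivative blinfun_apply (D x)) (at x)) \<and>
     (\<forall>x. (D has_derivative blinfun_apply (D2 x)) (at x)) \<and>
     continuous_on UNIV D2"

text \<open>Sum over |alpha| <= 2 of |partial^alpha phi (v)| (second-order terms over ordered pairs).\<close>
definition deriv_sum2 :: "('a::euclidean_space \<Rightarrow> real) \<Rightarrow> ('a \<Rightarrow> 'a \<Rightarrow>\<^sub>L real)
                        \<Rightarrow> ('a \<Rightarrow> 'a \<Rightarrow>\<^sub>L 'a \<Rightarrow>\<^sub>L real) \<Rightarrow> 'a \<Rightarrow> real" where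
  "deriv_sum2 phi D D2 v =
     \<bar>phi v\<bar> + (\<Sum>i\<in>Basis. \<bar>D v i\<bar>) + (\<Sum>i\<in>Basis. \<Sum>j\<in>Basis. \<bar>D2 v i j\<bar>)"

definition kernel_basic :: "(real \<Rightarrow> real \<Rightarrow> real) \<Rightarrow> bool" where
  "kernel_basic Bb \<longleftrightarrow>
     (\<lambda>p. Bb (fst p) (snd p)) \<in> borel_measurable (restrict_space borel ({0..} \<times> {-1..1})) \<and>
     (\<forall>r\<ge>0. \<forall>t\<in>{-1..1}. 0 \<le> Bb r t) \<and>
     (\<forall>t\<in>{-1<..<1}. continuous_on {0..} (\<lambda>r. Bb r t))"

end

theory Submission
  imports Defs
begin


lemma proj_perp_meas[measurable]: "proj_perp u \<in> borel_measurable borel"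
  unfolding proj_perp_def by measurable

lemma proj_perp_cont[continuous_intros]:
  "continuous_on S f \<Longrightarrow> continuous_on S g \<Longrightarrow> continuous_on S (\<lambda>x. proj_perp (f x) (g x))"
  unfolding proj_perp_def by (intro continuous_intros)

lemma proj_perp_tendsto[tendsto_intros]:
  "(f \<longlongrightarrow> a) F \<Longrightarrow> (g \<longlongrightarrow> b) F \<Longrightarrow> ((\<lambda>x. proj_perp (f x) (g x)) \<longlongrightarrow> proj_perp a b) F"
  unfolding proj_perp_def by (intro tendsto_intros)

definition SS :: "'a::euclidean_space \<Rightarrow> 'a set" where
  "SS u = {x. 0 < norm (proj_perp u x) \<and> norm (proj_perp u x) \<le> 1 \<and> \<bar>x \<bullet> u\<bar> \<le> 1/2}"
definition gg :: "'a::euclidean_space \<Rightarrow> 'a \<Rightarrow> 'a" where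
  "gg u x = proj_perp u x /\<^sub>R norm (proj_perp u x)"

lemma SS_sets[measurable]: "SS u \<in> sets borel" unfolding SS_def by measurable
lemma gg_meas[measurable]: "gg u \<in> borel_measurable borel" unfolding gg_def by measurable

lemma psm_eq: fixes u :: "'a::euclidean_space" shows "perp_sphere_measure u =
   density (distr (restrict_space lborel (SS u)) borel (gg u)) (\<lambda>_. ennreal (real (DIM('a) - 1)))"
proof (rule measure_eqI)
  show "sets (perp_sphere_measure u) = sets (density (distr (restrict_space lborel (SS u)) borel (gg u)) (\<lambda>_. ennreal (real (DIM('a) - 1))))"
    unfolding perp_sphere_measure_def by simp
next
  fix A assume A: "A \<in> sets (perp_sphere_measure u)"
  then have A': "A \<in> sets borel" unfolding perp_sphere_measure_def by simp
  show "emeasure (perp_sphere_measure u) A = emeasure (density (distr (restrict_space lborel (SS u)) borel (gg u)) (\<lambda>_. ennreal (real (DIM('a) - 1)))) A"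
    using A' unfolding perp_sphere_measure_def SS_def[symmetric] gg_def[symmetric]
    by (simp add: emeasure_density nn_integral_cmult_indicator ennreal_of_nat_eq_real_of_nat)
qed

lemma psm_integral:
  fixes f :: "'a::euclidean_space \<Rightarrow> real" and u :: 'a
  assumes f[measurable]: "f \<in> borel_measurable borel"
  shows "integral\<^sup>L (perp_sphere_measure u) f = real (DIM('a) - 1) * (\<integral>x. indicator (SS u) x * f (gg u x) \<partial>lborel)"
proof -
  have g: "gg u \<in> measurable (restrict_space lborel (SS u)) borel"
    by (intro measurable_restrict_space1) simp
  show ?thesis
    unfolding psm_eq
    apply (subst integral_density)
    using g apply (auto simp: integral_distr integral_restrict_space)
    done
qed

lemma coll_dir_norm: "norm (coll_dir v vs) = 1"
proof (cases "v = vs")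
  case True
  have "(SOME e. e \<in> (Basis::'a set)) \<in> Basis" by (rule someI_ex) (use nonempty_Basis in blast)
  then show ?thesis using True by (simp add: coll_dir_def)
next
  case False then show ?thesis by (simp add: coll_dir_def)
qed

lemma proj_perp_decomp: "x = proj_perp u x + (x \<bullet> u) *\<^sub>R u"
  by (simp add: proj_perp_def)

lemma SS_bound: assumes "norm u = 1" "x \<in> SS u" shows "norm x \<le> 2"
proof -
  have "norm x \<le> norm (proj_perp u x) + norm ((x \<bullet> u) *\<^sub>R u)"
    by (subst proj_perp_decomp[of x u]) (rule norm_triangle_ineq)
  also have "\<dots> \<le> 1 + 1/2" using assms by (auto simp: SS_def intro!: add_mono)
  finally show ?thesis by simp
qed

lemma gg_norm: "x \<in> SS u \<Longrightarrow> norm (gg u x) = 1"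
  by (auto simp: SS_def gg_def)

lemma proj_perp_neg: "proj_perp u (- x) = - proj_perp u x"
  by (simp add: proj_perp_def)

lemma SS_uminus: "(- x \<in> SS u) = (x \<in> SS u)"
  by (simp add: SS_def proj_perp_neg)

lemma gg_uminus: "gg u (- x) = - gg u x"
  by (simp add: gg_def proj_perp_neg)

lemma lborel_uminus_integral:
  fixes f :: "'a::euclidean_space \<Rightarrow> real"
  assumes [measurable]: "f \<in> borel_measurable borel"
  shows "(\<integral>x. f x \<partial>lborel) = (\<integral>x. f (- x) \<partial>lborel)"
proof -
  have "lborel = density (distr lborel borel (\<lambda>x::'a. 0 + (-1) *\<^sub>R x)) (\<lambda>_. \<bar>-1::real\<bar>^DIM('a))"
    by (rule lborel_affine) simp
  then have e: "lborel = distr lborel borel (\<lambda>x::'a. - x)" by (simp add: density_1)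
  have "(\<integral>x. f x \<partial>lborel) = (\<integral>x. f x \<partial>(distr lborel borel (\<lambda>x::'a. - x)))"
    by (subst e[symmetric]) simp
  also have "\<dots> = (\<integral>x. f (- x) \<partial>lborel)"
    by (rule integral_distr) auto
  finally show ?thesis .
qed

lemma psm_sym:
  fixes f :: "'a::euclidean_space \<Rightarrow> real" and u :: 'a
  assumes f[measurable]: "f \<in> borel_measurable borel"
  shows "integral\<^sup>L (perp_sphere_measure u) f = integral\<^sup>L (perp_sphere_measure u) (\<lambda>w. f (- w))"
proof -
  have "(\<integral>x. indicator (SS u) x * f (gg u x) \<partial>lborel) = (\<integral>x. indicator (SS u) (-x) * f (gg u (-x)) \<partial>lborel)"
    by (rule lborel_uminus_integral) measurable
  also have "\<dots> = (\<integral>x. indicator (SS u) x * f (- gg u x) \<partial>lborel)"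
    by (simp add: gg_uminus indicator_def SS_uminus)
  finally show ?thesis by (simp add: psm_integral)
qed

definition Cm :: "'a::euclidean_space itself \<Rightarrow> real" where
  "Cm _ = real (DIM('a) - 1) * measure lborel (cball (0::'a) 2)"

lemma Cm_nonneg: "0 \<le> Cm TYPE('a::euclidean_space)"
  by (simp add: Cm_def)

lemma psm_bound:
  fixes f :: "'a::euclidean_space \<Rightarrow> real" and u :: 'a
  assumes f[measurable]: "f \<in> borel_measurable borel" and u: "norm u = 1"
    and C: "\<And>w. norm w = 1 \<Longrightarrow> \<bar>f w\<bar> \<le> C"
  shows "\<bar>integral\<^sup>L (perp_sphere_measure u) f\<bar> \<le> Cm TYPE('a) * C"
proof -
  have C0: "0 \<le> C"
  proof -
    obtain e :: 'a where "e \<in> Basis" using nonempty_Basis by blast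
    then have "norm e = 1" by simp
    from C[OF this] show ?thesis by simp
  qed
  have int: "integrable lborel (\<lambda>x. indicator (cball (0::'a) 2) x * C)"
    using emeasure_lborel_cball_finite[of "0::'a" 2]
    by (intro integrable_mult_left integrable_indicator) auto
  have "\<bar>\<integral>x. indicator (SS u) x * f (gg u x) \<partial>lborel\<bar> \<le> (\<integral>x. \<bar>indicator (SS u) x * f (gg u x)\<bar> \<partial>lborel)"
    using integral_norm_bound[of lborel "\<lambda>x. indicator (SS u) x * f (gg u x)"] by simp
  also have "\<dots> \<le> (\<integral>x. indicator (cball (0::'a) 2) x * C \<partial>lborel)"
  proof (rule integral_mono'[OF int])
    fix x :: 'a
    show "0 \<le> indicator (cball (0::'a) 2) x * C" using C0 by simp
    show "\<bar>indicator (SS u) x * f (gg u x)\<bar> \<le> indicator (cball (0::'a) 2) x * C"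
    proof (cases "x \<in> SS u")
      case True
      then show ?thesis using SS_bound[OF u True] C[OF gg_norm[OF True]] by (simp add: indicator_def)
    qed (use C0 in \<open>simp add: indicator_def\<close>)
  qed
  also have "\<dots> = C * measure lborel (cball (0::'a) 2)" by simp
  finally have X: "\<bar>\<integral>x. indicator (SS u) x * f (gg u x) \<partial>lborel\<bar> \<le> C * measure lborel (cball (0::'a) 2)" .
  have "\<bar>integral\<^sup>L (perp_sphere_measure u) f\<bar> = real (DIM('a) - 1) * \<bar>\<integral>x. indicator (SS u) x * f (gg u x) \<partial>lborel\<bar>"
    unfolding psm_integral[OF f] abs_mult by simp
  also have "\<dots> \<le> real (DIM('a) - 1) * (C * measure lborel (cball (0::'a) 2))"
    by (rule mult_left_mono[OF X]) simp
  finally show ?thesis by (simp add: Cm_def ac_simps)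
qed

lemma D_lip:
  fixes D :: "'a::euclidean_space \<Rightarrow> 'a \<Rightarrow>\<^sub>L real"
  assumes dD: "\<forall>x. (D has_derivative blinfun_apply (D2 x)) (at x)"
    and K: "\<forall>z\<in>S. norm (D2 z) \<le> K" and S: "convex S" and xy: "x \<in> S" "y \<in> S"
  shows "norm (D y - D x) \<le> K * norm (y - x)"
  using differentiable_bound[OF S, of D "\<lambda>z. blinfun_apply (D2 z)" K y x] dD K xy
  by (auto simp: norm_blinfun.rep_eq[symmetric] intro: has_derivative_at_withinI)

lemma taylor1:
  fixes phi :: "'a::euclidean_space \<Rightarrow> real"
  assumes dphi: "\<forall>x. (phi has_derivative blinfun_apply (D x)) (at x)"
    and dD: "\<forall>x. (D has_derivative blinfun_apply (D2 x)) (at x)"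
    and K: "\<forall>z\<in>S. norm (D2 z) \<le> K" and S: "convex S" and xy: "x \<in> S" "y \<in> S"
  shows "\<bar>phi y - phi x - D x (y - x)\<bar> \<le> K * norm (y - x)^2"
proof -
  let ?f = "\<lambda>z. phi z - D x z"
  have K0: "0 \<le> K" using K xy by (meson norm_ge_zero order_trans)
  have seg: "closed_segment x y \<subseteq> S" using S xy by (simp add: closed_segment_subset)
  have deriv: "(?f has_derivative blinfun_apply (D z - D x)) (at z within closed_segment x y)" for z
  proof -
    have "(?f has_derivative (\<lambda>h. D z h - D x h)) (at z)"
      using dphi by (intro has_derivative_diff bounded_linear_imp_has_derivative blinfun.bounded_linear_right) auto
    moreover have "blinfun_apply (D z - D x) = (\<lambda>h. D z h - D x h)" by (rule ext) (simp add: blinfun.diff_left)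
    ultimately show ?thesis by (simp add: has_derivative_at_withinI)
  qed
  have bnd: "onorm (blinfun_apply (D z - D x)) \<le> K * norm (y - x)" if z: "z \<in> closed_segment x y" for z
  proof -
    have "onorm (blinfun_apply (D z - D x)) = norm (D z - D x)" by (simp add: norm_blinfun.rep_eq)
    also have "\<dots> \<le> K * norm (z - x)" using D_lip[OF dD K S xy(1)] seg z by auto
    also have "\<dots> \<le> K * norm (y - x)"
      using dist_in_closed_segment[OF z] K0 by (auto simp: dist_norm norm_minus_commute intro!: mult_left_mono)
    finally show ?thesis .
  qed
  have "norm (?f y - ?f x) \<le> K * norm (y - x) * norm (y - x)"
    by (rule differentiable_bound[OF convex_closed_segment deriv bnd]) auto
  moreover have "?f y - ?f x = phi y - phi x - D x (y - x)" by (simp add: blinfun.diff_right)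
  ultimately show ?thesis by (simp add: power2_eq_square mult.assoc)
qed



lemma sym4_aux:
  fixes c s :: real
  assumes cs: "c^2 + s^2 = 1" and c0: "0 \<le> c"
  shows "((1 - c) + \<bar>s\<bar>)^2 \<le> 8 * (1 - c)" "1 - c \<le> s^2" "c \<le> 1" "\<bar>s\<bar> \<le> 1"
proof -
  have "c^2 \<le> 1" using cs by (smt (verit) zero_le_power2)
  then show c1: "c \<le> 1" using c0 by (simp add: power_le_one_iff abs_square_le_1)
  have "s^2 \<le> 1" using cs by (smt (verit) zero_le_power2)
  then show "\<bar>s\<bar> \<le> 1" by (simp add: abs_square_le_1)
  have s2: "s^2 = (1 - c) * (1 + c)" using cs by (simp add: algebra_simps power2_eq_square)
  have "((1 - c) + \<bar>s\<bar>)^2 = (1 - c)^2 + 2 * ((1-c) * \<bar>s\<bar>) + s^2"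
    by (simp add: power2_sum)
  also have "2 * ((1-c) * \<bar>s\<bar>) \<le> (1 - c)^2 + s^2"
    using sum_squares_bound[of "1-c" "\<bar>s\<bar>"] by (simp add: algebra_simps)
  also have "(1 - c)^2 \<le> 2 * (1 - c)"
  proof -
    have "(1-c)*(1-c) \<le> (1-c)*2" by (rule mult_left_mono) (use c0 c1 in auto)
    then show ?thesis by (simp add: power2_eq_square mult.commute)
  qed
  also have "s^2 \<le> 2 * (1 - c)"
  proof -
    have "(1-c)*(1+c) \<le> (1-c)*2" by (rule mult_left_mono) (use c0 c1 in auto)
    then show ?thesis unfolding s2 by (simp add: mult.commute)
  qed
  finally show "((1 - c) + \<bar>s\<bar>)^2 \<le> 8 * (1 - c)" using \<open>(1 - c)^2 \<le> 2 * (1 - c)\<close> \<open>s^2 \<le> 2 * (1 - c)\<close> by linarith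
  show "1 - c \<le> s^2" unfolding s2 using c0 c1 by (simp add: mult_le_cancel_left1)
qed

lemma sym4_pos:
  fixes phi :: "'a::euclidean_space \<Rightarrow> real"
  assumes dphi: "\<forall>x. (phi has_derivative blinfun_apply (D x)) (at x)"
    and dD: "\<forall>x. (D has_derivative blinfun_apply (D2 x)) (at x)"
    and K: "\<forall>z. norm z \<le> \<rho> \<longrightarrow> norm (D2 z) \<le> K"
    and u: "norm u = 1" and w: "norm w \<le> 1" and cs: "c^2 + s^2 = 1" and c0: "0 \<le> c"
    and h: "0 \<le> h" and rho: "norm m + 2*h \<le> \<rho>"
  shows "\<bar>(phi (m + h *\<^sub>R (c *\<^sub>R u + s *\<^sub>R w)) + phi (m - h *\<^sub>R (c *\<^sub>R u + s *\<^sub>R w)) - phi (m + h *\<^sub>R u) - phi (m - h *\<^sub>R u))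
        + (phi (m + h *\<^sub>R (c *\<^sub>R u + s *\<^sub>R (-w))) + phi (m - h *\<^sub>R (c *\<^sub>R u + s *\<^sub>R (-w))) - phi (m + h *\<^sub>R u) - phi (m - h *\<^sub>R u))\<bar>
        \<le> 36 * K * h^2 * s^2"
proof -
  define S where "S = cball (0::'a) \<rho>"
  have KS: "\<forall>z\<in>S. norm (D2 z) \<le> K" using K by (simp add: S_def)
  have cS: "convex S" by (simp add: S_def)
  note aux = sym4_aux[OF cs c0]
  have c1: "c \<le> 1" by (rule aux(3))
  have abs_s: "\<bar>s\<bar> \<le> 1" by (rule aux(4))
  have abs_c: "\<bar>c\<bar> \<le> 1" using c0 c1 by simp
  define P where "P = m + h *\<^sub>R u"
  define Q where "Q = m - h *\<^sub>R u"
  define a where "a = (c - 1) *\<^sub>R u + s *\<^sub>R w"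
  define b where "b = (c - 1) *\<^sub>R u - s *\<^sub>R w"
  have e1: "m + h *\<^sub>R (c *\<^sub>R u + s *\<^sub>R w) = P + h *\<^sub>R a"
    and e2: "m - h *\<^sub>R (c *\<^sub>R u + s *\<^sub>R w) = Q + (- h) *\<^sub>R a"
    and e3: "m + h *\<^sub>R (c *\<^sub>R u + s *\<^sub>R (-w)) = P + h *\<^sub>R b"
    and e4: "m - h *\<^sub>R (c *\<^sub>R u + s *\<^sub>R (-w)) = Q + (- h) *\<^sub>R b"
    by (simp_all add: P_def Q_def a_def b_def algebra_simps)
  have nm: "norm (m + h *\<^sub>R (c *\<^sub>R u + s *\<^sub>R w')) \<le> \<rho> \<and> norm (m - h *\<^sub>R (c *\<^sub>R u + s *\<^sub>R w')) \<le> \<rho>"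
    if w'1: "norm w' \<le> 1" for w'
  proof -
    have n1: "norm (s *\<^sub>R w') \<le> 1" using abs_s w'1 by (simp add: mult_le_one)
    have "norm (c *\<^sub>R u + s *\<^sub>R w') \<le> norm (c *\<^sub>R u) + norm (s *\<^sub>R w')" by (rule norm_triangle_ineq)
    also have "\<dots> \<le> 2" using n1 abs_c u by simp
    finally have "norm (h *\<^sub>R (c *\<^sub>R u + s *\<^sub>R w')) \<le> h * 2"
      using h by (simp add: mult_left_mono)
    then show ?thesis
      using rho norm_triangle_ineq[of m "h *\<^sub>R (c *\<^sub>R u + s *\<^sub>R w')"] norm_triangle_ineq4[of m "h *\<^sub>R (c *\<^sub>R u + s *\<^sub>R w')"]
      by linarith
  qed
  have w': "norm (-w) \<le> 1" using w by simp
  have PS: "P \<in> S" and QS: "Q \<in> S"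
  proof -
    show "P \<in> S" using rho h u norm_triangle_ineq[of m "h *\<^sub>R u"] by (simp add: S_def P_def)
    show "Q \<in> S" using rho h u norm_triangle_ineq4[of m "h *\<^sub>R u"] by (simp add: S_def Q_def)
  qed
  have P1: "P + h *\<^sub>R a \<in> S" and Q1: "Q + (- h) *\<^sub>R a \<in> S" and P2: "P + h *\<^sub>R b \<in> S" and Q2: "Q + (- h) *\<^sub>R b \<in> S"
    unfolding S_def mem_cball_0 e1[symmetric] e2[symmetric] e3[symmetric] e4[symmetric]
    using nm[OF w] nm[OF w'] by blast+
  have nsw: "norm (s *\<^sub>R w) \<le> \<bar>s\<bar>" using w by (simp add: mult_left_le)
  have na: "norm a \<le> (1 - c) + \<bar>s\<bar>"
  proof -
    have "norm a \<le> norm ((c - 1) *\<^sub>R u) + norm (s *\<^sub>R w)" unfolding a_def by (rule norm_triangle_ineq)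
    then show ?thesis using u c1 nsw by simp
  qed
  have nb: "norm b \<le> (1 - c) + \<bar>s\<bar>"
  proof -
    have "norm b \<le> norm ((c - 1) *\<^sub>R u) + norm (s *\<^sub>R w)" unfolding b_def by (rule norm_triangle_ineq4)
    then show ?thesis using u c1 nsw by simp
  qed
  have sq: "norm (t *\<^sub>R v)^2 \<le> h^2 * (8 * (1 - c))" if "\<bar>t\<bar> = h" "norm v \<le> (1 - c) + \<bar>s\<bar>" for t v
  proof -
    have "norm v ^2 \<le> ((1 - c) + \<bar>s\<bar>)^2" using that(2) by (simp add: power_mono)
    also have "\<dots> \<le> 8 * (1 - c)" by (rule aux(1))
    finally have "norm v ^2 \<le> 8 * (1 - c)" .
    then have "h^2 * norm v ^2 \<le> h^2 * (8 * (1 - c))" by (simp add: mult_left_mono)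
    then show ?thesis using that(1) by (simp add: power_mult_distrib)
  qed
  have K0: "0 \<le> K" using KS PS by (meson norm_ge_zero order_trans)
  have tay: "\<bar>phi (X + t *\<^sub>R v) - phi X - D X (t *\<^sub>R v)\<bar> \<le> K * (h^2 * (8 * (1 - c)))"
    if "X \<in> S" "X + t *\<^sub>R v \<in> S" "\<bar>t\<bar> = h" "norm v \<le> (1 - c) + \<bar>s\<bar>" for X t v
  proof -
    have "\<bar>phi (X + t *\<^sub>R v) - phi X - D X (X + t *\<^sub>R v - X)\<bar> \<le> K * norm (X + t *\<^sub>R v - X)^2"
      by (rule taylor1[OF dphi dD KS cS that(1,2)])
    also have "\<dots> \<le> K * (h^2 * (8 * (1 - c)))" using sq[OF that(3,4)] K0 by (simp add: mult_left_mono)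
    finally show ?thesis by simp
  qed
  have t1: "\<bar>phi (P + h *\<^sub>R a) - phi P - D P (h *\<^sub>R a)\<bar> \<le> K * (h^2 * (8 * (1 - c)))"
    by (rule tay[OF PS P1]) (use h na in auto)
  have t2: "\<bar>phi (P + h *\<^sub>R b) - phi P - D P (h *\<^sub>R b)\<bar> \<le> K * (h^2 * (8 * (1 - c)))"
    by (rule tay[OF PS P2]) (use h nb in auto)
  have t3: "\<bar>phi (Q + (- h) *\<^sub>R a) - phi Q - D Q ((- h) *\<^sub>R a)\<bar> \<le> K * (h^2 * (8 * (1 - c)))"
    by (rule tay[OF QS Q1]) (use h na in auto)
  have t4: "\<bar>phi (Q + (- h) *\<^sub>R b) - phi Q - D Q ((- h) *\<^sub>R b)\<bar> \<le> K * (h^2 * (8 * (1 - c)))"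
    by (rule tay[OF QS Q2]) (use h nb in auto)
  have lin: "D P (h *\<^sub>R a) + D P (h *\<^sub>R b) + D Q ((- h) *\<^sub>R a) + D Q ((- h) *\<^sub>R b) = (D P - D Q) ((2 * h * (c - 1)) *\<^sub>R u)"
    by (simp add: a_def b_def blinfun.diff_left blinfun.scaleR_right blinfun.add_right blinfun.diff_right algebra_simps)
  have "\<bar>(D P - D Q) ((2 * h * (c - 1)) *\<^sub>R u)\<bar> \<le> norm (D P - D Q) * norm ((2 * h * (c - 1)) *\<^sub>R u)"
    using norm_blinfun[of "D P - D Q" "(2 * h * (c - 1)) *\<^sub>R u"] by (simp only: real_norm_def)
  also have "\<dots> \<le> (K * norm (P - Q)) * (2 * h * (1 - c))"
  proof (rule mult_mono)
    show "norm (D P - D Q) \<le> K * norm (P - Q)" by (rule D_lip[OF dD KS cS QS PS])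
    show "norm ((2 * h * (c - 1)) *\<^sub>R u) \<le> 2 * h * (1 - c)" using u h c1 by (simp add: abs_mult)
  qed (use K0 in auto)
  also have "norm (P - Q) = 2 * h"
  proof -
    have "P - Q = (2 * h) *\<^sub>R u" by (simp add: P_def Q_def scaleR_2 flip: scaleR_scaleR)
    then show ?thesis using u h by simp
  qed
  finally have tl: "\<bar>D P (h *\<^sub>R a) + D P (h *\<^sub>R b) + D Q ((- h) *\<^sub>R a) + D Q ((- h) *\<^sub>R b)\<bar> \<le> K * (2 * h) * (2 * h * (1 - c))"
    unfolding lin .
  have "\<bar>(phi (P + h *\<^sub>R a) + phi (Q + (- h) *\<^sub>R a) - phi P - phi Q)
        + (phi (P + h *\<^sub>R b) + phi (Q + (- h) *\<^sub>R b) - phi P - phi Q)\<bar>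
        \<le> 4 * (K * (h^2 * (8 * (1 - c)))) + K * (2 * h) * (2 * h * (1 - c))"
    using t1 t2 t3 t4 tl by linarith
  also have "\<dots> = 36 * K * h^2 * (1 - c)" by (simp add: algebra_simps power2_eq_square)
  also have "\<dots> \<le> 36 * K * h^2 * s^2" using aux(2) K0 by (simp add: mult_left_mono)
  finally show ?thesis unfolding e1 e2 e3 e4 P_def[symmetric] Q_def[symmetric] .
qed

lemma sym4_all:
  fixes phi :: "'a::euclidean_space \<Rightarrow> real"
  assumes dphi: "\<forall>x. (phi has_derivative blinfun_apply (D x)) (at x)"
    and dD: "\<forall>x. (D has_derivative blinfun_apply (D2 x)) (at x)"
    and K: "\<forall>z. norm z \<le> \<rho> \<longrightarrow> norm (D2 z) \<le> K"
    and u: "norm u = 1" and w: "norm w \<le> 1" and cs: "c^2 + s^2 = 1"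
    and h: "0 \<le> h" and rho: "norm m + 2*h \<le> \<rho>"
  shows "\<bar>(phi (m + h *\<^sub>R (c *\<^sub>R u + s *\<^sub>R w)) + phi (m - h *\<^sub>R (c *\<^sub>R u + s *\<^sub>R w)) - phi (m + h *\<^sub>R u) - phi (m - h *\<^sub>R u))
        + (phi (m + h *\<^sub>R (c *\<^sub>R u + s *\<^sub>R (-w))) + phi (m - h *\<^sub>R (c *\<^sub>R u + s *\<^sub>R (-w))) - phi (m + h *\<^sub>R u) - phi (m - h *\<^sub>R u))\<bar>
        \<le> 36 * K * h^2 * s^2"
proof (cases "0 \<le> c")
  case True
  then show ?thesis by (rule sym4_pos[OF dphi dD K u w cs _ h rho])
next
  case False
  have u': "norm (-u) = 1" using u by simp
  have cs': "(-c)^2 + s^2 = 1" using cs by simp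
  have "\<bar>(phi (m + h *\<^sub>R ((-c) *\<^sub>R (-u) + s *\<^sub>R w)) + phi (m - h *\<^sub>R ((-c) *\<^sub>R (-u) + s *\<^sub>R w)) - phi (m + h *\<^sub>R (-u)) - phi (m - h *\<^sub>R (-u)))
        + (phi (m + h *\<^sub>R ((-c) *\<^sub>R (-u) + s *\<^sub>R (-w))) + phi (m - h *\<^sub>R ((-c) *\<^sub>R (-u) + s *\<^sub>R (-w))) - phi (m + h *\<^sub>R (-u)) - phi (m - h *\<^sub>R (-u)))\<bar>
        \<le> 36 * K * h^2 * s^2"
    by (rule sym4_pos[OF dphi dD K u' w cs' _ h rho]) (use False in simp)
  moreover have "(-c) *\<^sub>R (-u) = c *\<^sub>R u" "m + h *\<^sub>R (-u) = m - h *\<^sub>R u" "m - h *\<^sub>R (-u) = m + h *\<^sub>R u"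
    by simp_all
  ultimately show ?thesis by (simp only:)
qed

definition Dp :: "('a::euclidean_space \<Rightarrow> real) \<Rightarrow> 'a \<Rightarrow> 'a \<Rightarrow> 'a \<Rightarrow> real \<Rightarrow> 'a \<Rightarrow> real" where
  "Dp phi v vs u \<theta> \<omega> =
     (let \<sigma> = cos \<theta> *\<^sub>R u + sin \<theta> *\<^sub>R \<omega>;
          v' = (1/2) *\<^sub>R (v + vs) + (norm (v - vs) / 2) *\<^sub>R \<sigma>;
          vs' = (1/2) *\<^sub>R (v + vs) - (norm (v - vs) / 2) *\<^sub>R \<sigma>
      in phi v' + phi vs' - phi v - phi vs)"

lemma Delta_phi_Dp: "Delta_phi phi v vs \<theta> = Dp phi v vs (coll_dir v vs) \<theta>"
  by (rule ext) (simp add: Delta_phi_def Dp_def)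

lemma Dp_sym_bound:
  fixes phi :: "'a::euclidean_space \<Rightarrow> real"
  assumes dphi: "\<forall>x. (phi has_derivative blinfun_apply (D x)) (at x)"
    and dD: "\<forall>x. (D has_derivative blinfun_apply (D2 x)) (at x)"
    and K: "\<forall>z. norm z \<le> 2 * (norm v + norm vs) \<longrightarrow> norm (D2 z) \<le> K"
    and w: "norm w \<le> 1"
  shows "\<bar>Dp phi v vs (coll_dir v vs) \<theta> w + Dp phi v vs (coll_dir v vs) \<theta> (-w)\<bar> \<le> 9 * K * norm (v - vs)^2 * sin \<theta> ^ 2"
proof (cases "v = vs")
  case True
  have K0: "0 \<le> K" using K[rule_format, of 0] by simp (meson norm_ge_zero order_trans)
  have "(1/2) *\<^sub>R (vs + vs) = vs" by (simp add: scaleR_2[symmetric])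
  then show ?thesis using True K0 by (simp add: Dp_def)
next
  case False
  define m where "m = (1/2) *\<^sub>R (v + vs)"
  define h where "h = norm (v - vs) / 2"
  define u where "u = coll_dir v vs"
  have u: "norm u = 1" by (simp add: u_def coll_dir_norm)
  have h0: "0 \<le> h" by (simp add: h_def)
  have hu: "h *\<^sub>R u = (1/2) *\<^sub>R (v - vs)" using False by (simp add: h_def u_def coll_dir_def)
  have vm: "v = m + h *\<^sub>R u" "vs = m - h *\<^sub>R u" unfolding hu m_def
    by (simp_all add: algebra_simps) (simp_all add: scaleR_left_distrib[symmetric])
  have rho: "norm m + 2*h \<le> 2 * (norm v + norm vs)"
  proof -
    have "norm m \<le> (norm v + norm vs) / 2" unfolding m_def using norm_triangle_ineq[of v vs] by simp
    moreover have "2 * h \<le> norm v + norm vs" unfolding h_def using norm_triangle_ineq4[of v vs] by simp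
    ultimately show ?thesis using norm_ge_zero[of v] norm_ge_zero[of vs] by argo
  qed
  have cs: "(cos \<theta>)^2 + (sin \<theta>)^2 = 1" by simp
  have eq: "Dp phi v vs u \<theta> w' = phi (m + h *\<^sub>R (cos \<theta> *\<^sub>R u + sin \<theta> *\<^sub>R w')) + phi (m - h *\<^sub>R (cos \<theta> *\<^sub>R u + sin \<theta> *\<^sub>R w'))
     - phi (m + h *\<^sub>R u) - phi (m - h *\<^sub>R u)" for w'
    unfolding Dp_def Let_def m_def[symmetric] h_def[symmetric] by (simp only: vm[symmetric])
  have "\<bar>Dp phi v vs u \<theta> w + Dp phi v vs u \<theta> (-w)\<bar> \<le> 36 * K * h^2 * (sin \<theta>)^2"
    unfolding eq by (rule sym4_all[OF dphi dD K u w cs h0 rho])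
  also have "36 * K * h^2 * (sin \<theta>)^2 = 9 * K * norm (v - vs)^2 * sin \<theta> ^ 2"
    by (simp add: h_def power2_eq_square)
  finally show ?thesis by (simp add: u_def)
qed



lemma psm_integrable:
  fixes f :: "'a::euclidean_space \<Rightarrow> real" and u :: 'a
  assumes f[measurable]: "f \<in> borel_measurable borel" and u: "norm u = 1"
    and C: "\<And>w. norm w = 1 \<Longrightarrow> \<bar>f w\<bar> \<le> C"
  shows "integrable (perp_sphere_measure u) f"
proof -
  have g: "gg u \<in> measurable (restrict_space lborel (SS u)) borel"
    by (intro measurable_restrict_space1) simp
  have int: "integrable lborel (\<lambda>x. indicator (cball (0::'a) 2) x * C)"
    using emeasure_lborel_cball_finite[of "0::'a" 2]
    by (intro integrable_mult_left integrable_indicator) auto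
  have "integrable lborel (\<lambda>x. indicator (SS u) x * f (gg u x))"
  proof (rule Bochner_Integration.integrable_bound[OF int])
    show "(\<lambda>x. indicator (SS u) x * f (gg u x)) \<in> borel_measurable lborel" by measurable
    show "AE x in lborel. norm (indicator (SS u) x * f (gg u x)) \<le> norm (indicator (cball (0::'a) 2) x * C)"
    proof (intro AE_I2)
      fix x :: 'a
      show "norm (indicator (SS u) x * f (gg u x)) \<le> norm (indicator (cball (0::'a) 2) x * C)"
      proof (cases "x \<in> SS u")
        case True
        then show ?thesis using SS_bound[OF u True] C[OF gg_norm[OF True]] by (simp add: indicator_def)
      qed (simp add: indicator_def)
    qed
  qed
  then show ?thesis unfolding psm_eq
    by (subst integrable_density) (auto simp: integrable_distr_eq[OF g] integrable_restrict_space)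
qed

lemma C2_cont: "\<forall>x. (phi has_derivative blinfun_apply (D x)) (at x) \<Longrightarrow> continuous_on UNIV phi"
  by (intro continuous_at_imp_continuous_on ballI has_derivative_continuous) auto

lemma Dp_cont:
  assumes cphi: "continuous_on UNIV phi"
  shows "continuous_on UNIV (Dp phi v vs u \<theta>)"
  unfolding Dp_def Let_def
  by (intro continuous_intros continuous_on_compose2[OF cphi]) auto

lemma Dp_meas[measurable]:
  assumes cphi: "continuous_on UNIV phi"
  shows "Dp phi v vs u \<theta> \<in> borel_measurable borel"
  by (rule borel_measurable_continuous_onI[OF Dp_cont[OF cphi]])

lemma Dp_tendsto:
  fixes phi :: "'a::euclidean_space \<Rightarrow> real"
  assumes cphi: "continuous_on UNIV phi"
    and "(V \<longlongrightarrow> v) sequentially" "(VS \<longlongrightarrow> vs) sequentially" "(U \<longlongrightarrow> u) sequentially" "(TH \<longlongrightarrow> \<theta>) sequentially" "(W \<longlongrightarrow> w) sequentially"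
  shows "((\<lambda>k. Dp phi (V k) (VS k) (U k) (TH k) (W k)) \<longlongrightarrow> Dp phi v vs u \<theta> w) sequentially"
proof -
  have pt: "((\<lambda>k. phi (g k)) \<longlongrightarrow> phi l) sequentially" if "(g \<longlongrightarrow> l) sequentially" for g l
    using continuous_on_tendsto_compose[OF cphi that] by simp
  note tc = tendsto_cos[OF assms(5)] tendsto_sin[OF assms(5)]
  have a: "((\<lambda>k. (1/2) *\<^sub>R (V k + VS k) + (norm (V k - VS k) / 2) *\<^sub>R (cos (TH k) *\<^sub>R U k + sin (TH k) *\<^sub>R W k))
      \<longlongrightarrow> (1/2) *\<^sub>R (v + vs) + (norm (v - vs) / 2) *\<^sub>R (cos \<theta> *\<^sub>R u + sin \<theta> *\<^sub>R w)) sequentially"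
    by (intro tendsto_add tendsto_scaleR tendsto_const tendsto_divide tendsto_norm tendsto_diff tc assms) simp_all
  have b: "((\<lambda>k. (1/2) *\<^sub>R (V k + VS k) - (norm (V k - VS k) / 2) *\<^sub>R (cos (TH k) *\<^sub>R U k + sin (TH k) *\<^sub>R W k))
      \<longlongrightarrow> (1/2) *\<^sub>R (v + vs) - (norm (v - vs) / 2) *\<^sub>R (cos \<theta> *\<^sub>R u + sin \<theta> *\<^sub>R w)) sequentially"
    by (intro tendsto_add tendsto_scaleR tendsto_const tendsto_divide tendsto_norm tendsto_diff tc assms) simp_all
  show ?thesis unfolding Dp_def Let_def
    by (intro tendsto_diff tendsto_add pt a b assms)
qed

lemma Dp_bound:
  fixes phi :: "'a::euclidean_space \<Rightarrow> real"
  assumes M: "\<forall>z. norm z \<le> \<rho> \<longrightarrow> \<bar>phi z\<bar> \<le> M" and rho: "2 * (norm v + norm vs) \<le> \<rho>"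
    and u: "norm u \<le> 1" and w: "norm w \<le> 1"
  shows "\<bar>Dp phi v vs u \<theta> w\<bar> \<le> 4 * M"
proof -
  define \<sigma> where "\<sigma> = cos \<theta> *\<^sub>R u + sin \<theta> *\<^sub>R w"
  have "norm \<sigma> \<le> norm (cos \<theta> *\<^sub>R u) + norm (sin \<theta> *\<^sub>R w)" unfolding \<sigma>_def by (rule norm_triangle_ineq)
  also have "norm (cos \<theta> *\<^sub>R u) \<le> 1" using u abs_cos_le_one[of \<theta>] by (simp add: mult_le_one)
  also have "norm (sin \<theta> *\<^sub>R w) \<le> 1" using w abs_sin_le_one[of \<theta>] by (simp add: mult_le_one)
  finally have ns: "norm \<sigma> \<le> 2" by simp
  have hs: "norm ((norm (v - vs) / 2) *\<^sub>R \<sigma>) \<le> norm v + norm vs"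
  proof -
    have "norm ((norm (v - vs) / 2) *\<^sub>R \<sigma>) = (norm (v - vs) / 2) * norm \<sigma>" by simp
    also have "\<dots> \<le> (norm (v - vs) / 2) * 2" using ns by (intro mult_left_mono) auto
    also have "\<dots> \<le> norm v + norm vs" using norm_triangle_ineq4[of v vs] by simp
    finally show ?thesis .
  qed
  have nm: "norm ((1/2) *\<^sub>R (v + vs)) \<le> norm v + norm vs"
  proof -
    have "norm ((1/2) *\<^sub>R (v + vs)) = norm (v + vs) / 2" by simp
    then show ?thesis using norm_triangle_ineq[of v vs] norm_ge_zero[of v] norm_ge_zero[of vs] by argo
  qed
  have p1: "norm ((1/2) *\<^sub>R (v + vs) + (norm (v - vs) / 2) *\<^sub>R \<sigma>) \<le> \<rho>"
    using norm_triangle_ineq[of "(1/2) *\<^sub>R (v + vs)" "(norm (v - vs) / 2) *\<^sub>R \<sigma>"] hs nm rho by argo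
  have p2: "norm ((1/2) *\<^sub>R (v + vs) - (norm (v - vs) / 2) *\<^sub>R \<sigma>) \<le> \<rho>"
    using norm_triangle_ineq4[of "(1/2) *\<^sub>R (v + vs)" "(norm (v - vs) / 2) *\<^sub>R \<sigma>"] hs nm rho by argo
  have p3: "norm v \<le> \<rho>" "norm vs \<le> \<rho>" using rho norm_ge_zero[of v] norm_ge_zero[of vs] by argo+
  show ?thesis unfolding Dp_def Let_def \<sigma>_def[symmetric]
    using M[rule_format, OF p1] M[rule_format, OF p2] M[rule_format, OF p3(1)] M[rule_format, OF p3(2)] by argo
qed

lemma cont_bounded:
  fixes f :: "'a::euclidean_space \<Rightarrow> real"
  assumes "continuous_on UNIV f"
  shows "\<exists>M. \<forall>z. norm z \<le> \<rho> \<longrightarrow> \<bar>f z\<bar> \<le> M"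
proof -
  have "bounded (f ` cball 0 \<rho>)"
    by (rule compact_imp_bounded[OF compact_continuous_image]) (use assms continuous_on_subset in auto)
  then obtain M where "\<forall>y\<in>f ` cball 0 \<rho>. norm y \<le> M" by (auto simp: bounded_iff)
  then show ?thesis by (intro exI[of _ M]) auto
qed

lemma JJ_bound:
  fixes phi :: "'a::euclidean_space \<Rightarrow> real"
  assumes dphi: "\<forall>x. (phi has_derivative blinfun_apply (D x)) (at x)"
    and dD: "\<forall>x. (D has_derivative blinfun_apply (D2 x)) (at x)"
    and K: "\<forall>z. norm z \<le> 2 * (norm v + norm vs) \<longrightarrow> norm (D2 z) \<le> K"
  shows "\<bar>integral\<^sup>L (perp_sphere_measure (coll_dir v vs)) (Dp phi v vs (coll_dir v vs) \<theta>)\<bar>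
           \<le> Cm TYPE('a) * (9 * K * norm (v - vs)^2 * sin \<theta> ^ 2)"
proof -
  define u where "u = coll_dir v vs"
  define f where "f = Dp phi v vs u \<theta>"
  have u: "norm u = 1" by (simp add: u_def coll_dir_norm)
  have cphi: "continuous_on UNIV phi" by (rule C2_cont[OF dphi])
  have fm[measurable]: "f \<in> borel_measurable borel" unfolding f_def by (rule Dp_meas[OF cphi])
  obtain M where M: "\<forall>z. norm z \<le> 2 * (norm v + norm vs) \<longrightarrow> \<bar>phi z\<bar> \<le> M"
    using cont_bounded[OF cphi] by blast
  have fb: "\<bar>f w\<bar> \<le> 4 * M" if "norm w = 1" for w
    unfolding f_def by (rule Dp_bound[OF M]) (use u that in auto)
  have fb': "\<bar>f (-w)\<bar> \<le> 4 * M" if "norm w = 1" for w using fb[of "-w"] that by simp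
  have i1: "integrable (perp_sphere_measure u) f" by (rule psm_integrable[OF fm u fb])
  have i2: "integrable (perp_sphere_measure u) (\<lambda>w. f (-w))" by (rule psm_integrable[OF _ u fb']) measurable
  have K0: "0 \<le> K" using K[rule_format, of 0] by simp (meson norm_ge_zero order_trans)
  have "integral\<^sup>L (perp_sphere_measure u) f = integral\<^sup>L (perp_sphere_measure u) (\<lambda>w. (f w + f (-w)) / 2)"
    using psm_sym[OF fm, of u] i1 i2 by simp
  also have "\<bar>\<dots>\<bar> \<le> Cm TYPE('a) * (9 * K * norm (v - vs)^2 * sin \<theta> ^ 2)"
  proof (rule psm_bound[OF _ u])
    show "(\<lambda>w. (f w + f (- w)) / 2) \<in> borel_measurable borel" by measurable
    fix w :: 'a assume "norm w = 1"
    then have "\<bar>f w + f (-w)\<bar> \<le> 9 * K * norm (v - vs)^2 * sin \<theta> ^ 2"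
      unfolding f_def u_def by (intro Dp_sym_bound[OF dphi dD K]) simp
    moreover have "0 \<le> 9 * K * norm (v - vs)^2 * sin \<theta> ^ 2" using K0 by simp
    ultimately show "\<bar>(f w + f (- w)) / 2\<bar> \<le> 9 * K * norm (v - vs)^2 * sin \<theta> ^ 2" by simp
  qed
  finally show ?thesis by (simp add: f_def u_def)
qed



lemma negl_null: "negligible (Z::'a::euclidean_space set) \<Longrightarrow> Z \<in> sets borel \<Longrightarrow> Z \<in> null_sets lborel"
  by (metis negligible_iff_null_sets null_sets_completion_iff sets_lborel)

lemma linear_proj_perp: "linear (proj_perp u)"
  by (rule linearI) (simp_all add: proj_perp_def inner_add_left algebra_simps)

lemma proj_perp_idem: "norm u = 1 \<Longrightarrow> proj_perp u (proj_perp u x) = proj_perp u x"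
proof -
  assume u: "norm u = 1"
  then have uu: "u \<bullet> u = 1" by (simp add: norm_eq_1)
  have "proj_perp u x \<bullet> u = 0" unfolding proj_perp_def by (simp add: inner_diff_left uu)
  then show ?thesis by (simp add: proj_perp_def[of u "proj_perp u x"])
qed

lemma Z_null:
  fixes u :: "'a::euclidean_space"
  assumes u: "norm u = 1" and dim: "DIM('a) \<ge> 2"
  shows "{x. proj_perp u x = 0} \<union> {x. u \<bullet> x = 1/2} \<union> {x. u \<bullet> x = -1/2} \<union> {x. norm (proj_perp u x) = 1} \<in> null_sets lborel"
proof (rule negl_null)
  show "{x. proj_perp u x = 0} \<union> {x. u \<bullet> x = 1/2} \<union> {x. u \<bullet> x = -1/2} \<union> {x. norm (proj_perp u x) = 1} \<in> sets borel"
    by measurable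
  have u0: "u \<noteq> 0" using u by auto
  have n1: "negligible {x. proj_perp u x = 0}"
  proof (rule negligible_subset[OF negligible_lowdim])
    show "dim (span {u}) < DIM('a)" using dim u0 by simp
    show "{x. proj_perp u x = 0} \<subseteq> span {u}"
    proof
      fix x assume "x \<in> {x. proj_perp u x = 0}"
      then have "x = (x \<bullet> u) *\<^sub>R u" by (simp add: proj_perp_def)
      also have "\<dots> \<in> span {u}" by (intro span_mul span_base) simp
      finally show "x \<in> span {u}" .
    qed
  qed
  have n2: "negligible {x. u \<bullet> x = 1/2}" "negligible {x. u \<bullet> x = -1/2}"
    using u0 by (intro negligible_hyperplane; simp)+
  define T where "T = {x. norm (proj_perp u x) \<le> 1}"
  have cT: "convex T"
  proof -
    have "T = proj_perp u -` cball 0 1" by (auto simp: T_def)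
    then show ?thesis using convex_linear_vimage[OF linear_proj_perp convex_cball] by simp
  qed
  have n4: "negligible {x. norm (proj_perp u x) = 1}"
  proof (rule negligible_subset[OF negligible_convex_frontier[OF cT]])
    show "{x. norm (proj_perp u x) = 1} \<subseteq> frontier T"
    proof
      fix x assume x: "x \<in> {x. norm (proj_perp u x) = 1}"
      then have "x \<in> T" by (simp add: T_def)
      then have "x \<in> closure T" using closure_subset by blast
      moreover have "x \<notin> interior T"
      proof
        assume "x \<in> interior T"
        then obtain e where e: "e > 0" "ball x e \<subseteq> T" by (auto simp: mem_interior)
        define y where "y = x + (e/2) *\<^sub>R proj_perp u x"
        have "dist x y = e/2" using x e by (simp add: y_def dist_norm)
        then have "y \<in> T" using e by auto
        moreover have "proj_perp u y = (1 + e/2) *\<^sub>R proj_perp u x"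
          using proj_perp_idem[OF u, of x] linear_proj_perp[of u]
          by (simp add: y_def linear_add linear_scale algebra_simps)
        then have "norm (proj_perp u y) = 1 + e/2" using x e by simp
        ultimately show False using e by (simp add: T_def)
      qed
      ultimately show "x \<in> frontier T" by (simp add: frontier_def)
    qed
  qed
  show "negligible ({x. proj_perp u x = 0} \<union> {x. u \<bullet> x = 1/2} \<union> {x. u \<bullet> x = -1/2} \<union> {x. norm (proj_perp u x) = 1})"
    using n1 n2 n4 by simp
qed

lemma psm_tendsto:
  fixes u :: "'a::euclidean_space" and U :: "nat \<Rightarrow> 'a" and H :: "nat \<Rightarrow> 'a \<Rightarrow> real" and h :: "'a \<Rightarrow> real"
  assumes dim: "DIM('a) \<ge> 2"
    and U: "U \<longlonglongrightarrow> u" and u: "norm u = 1" and Un: "\<And>k. norm (U k) = 1"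
    and Hm[measurable]: "\<And>k. H k \<in> borel_measurable borel" and hm[measurable]: "h \<in> borel_measurable borel"
    and C: "\<And>k w. norm w = 1 \<Longrightarrow> \<bar>H k w\<bar> \<le> C"
    and conv: "\<And>x. proj_perp u x \<noteq> 0 \<Longrightarrow> (\<lambda>k. H k (gg (U k) x)) \<longlonglongrightarrow> h (gg u x)"
  shows "(\<lambda>k. integral\<^sup>L (perp_sphere_measure (U k)) (H k)) \<longlonglongrightarrow> integral\<^sup>L (perp_sphere_measure u) h"
proof -
  have C0: "0 \<le> C"
  proof -
    obtain e :: 'a where "e \<in> Basis" using nonempty_Basis by blast
    then have "norm e = 1" by simp
    from C[OF this, of 0] show ?thesis using abs_ge_zero[of "H 0 e"] by linarith
  qed
  define Z where "Z = {x. proj_perp u x = 0} \<union> {x. u \<bullet> x = 1/2} \<union> {x. u \<bullet> x = -1/2} \<union> {x. norm (proj_perp u x) = 1}"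
  have Z: "Z \<in> null_sets lborel" unfolding Z_def by (rule Z_null[OF u dim])
  have int: "integrable lborel (\<lambda>x. indicator (cball (0::'a) 2) x * C)"
    using emeasure_lborel_cball_finite[of "0::'a" 2]
    by (intro integrable_mult_left integrable_indicator) auto
  have lim: "(\<lambda>k. \<integral>x. indicator (SS (U k)) x * H k (gg (U k) x) \<partial>lborel) \<longlonglongrightarrow> (\<integral>x. indicator (SS u) x * h (gg u x) \<partial>lborel)"
  proof (rule integral_dominated_convergence[OF _ _ int])
    show "(\<lambda>x. indicator (SS u) x * h (gg u x)) \<in> borel_measurable lborel" by measurable
    show "(\<lambda>x. indicator (SS (U k)) x * H k (gg (U k) x)) \<in> borel_measurable lborel" for k by measurable
    show "AE x in lborel. norm (indicator (SS (U k)) x * H k (gg (U k) x)) \<le> indicator (cball (0::'a) 2) x * C" for k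
    proof (intro AE_I2)
      fix x :: 'a
      show "norm (indicator (SS (U k)) x * H k (gg (U k) x)) \<le> indicator (cball (0::'a) 2) x * C"
      proof (cases "x \<in> SS (U k)")
        case True
        then show ?thesis using SS_bound[OF Un True] C[OF gg_norm[OF True]] by (simp add: indicator_def)
      qed (use C0 in \<open>simp add: indicator_def\<close>)
    qed
    show "AE x in lborel. (\<lambda>k. indicator (SS (U k)) x * H k (gg (U k) x)) \<longlonglongrightarrow> indicator (SS u) x * h (gg u x)"
    proof (rule AE_I'[OF Z], safe)
      fix x :: 'a
      assume nc: "\<not> (\<lambda>k. indicator (SS (U k)) x * H k (gg (U k) x)) \<longlonglongrightarrow> indicator (SS u) x * h (gg u x)"
      show "x \<in> Z"
      proof (rule ccontr)
        assume xZ: "x \<notin> Z"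
        then have p0: "proj_perp u x \<noteq> 0" and n1: "norm (proj_perp u x) \<noteq> 1"
          and i1: "x \<bullet> u \<noteq> 1/2" and i2: "x \<bullet> u \<noteq> -1/2"
          by (auto simp: Z_def inner_commute)
        have tn: "(\<lambda>k. norm (proj_perp (U k) x)) \<longlonglongrightarrow> norm (proj_perp u x)"
          by (intro tendsto_intros U)
        have ti: "(\<lambda>k. \<bar>x \<bullet> U k\<bar>) \<longlonglongrightarrow> \<bar>x \<bullet> u\<bar>"
          by (intro tendsto_intros U)
        have npos: "0 < norm (proj_perp u x)" using p0 by simp
        have ev0: "eventually (\<lambda>k. 0 < norm (proj_perp (U k) x)) sequentially"
          using order_tendstoD(1)[OF tn npos] .
        show False
        proof (cases "x \<in> SS u")
          case True
          then have a1: "norm (proj_perp u x) < 1" and a2: "\<bar>x \<bullet> u\<bar> < 1/2"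
            using n1 i1 i2 by (auto simp: SS_def abs_if)
          have ev: "eventually (\<lambda>k. x \<in> SS (U k)) sequentially"
            using ev0 order_tendstoD(2)[OF tn a1] order_tendstoD(2)[OF ti a2]
            by eventually_elim (auto simp: SS_def)
          have "(\<lambda>k. H k (gg (U k) x)) \<longlonglongrightarrow> indicator (SS u) x * h (gg u x)"
            using conv[OF p0] True by (simp add: indicator_def)
          moreover have "eventually (\<lambda>k. H k (gg (U k) x) = indicator (SS (U k)) x * H k (gg (U k) x)) sequentially"
            using ev by eventually_elim (simp add: indicator_def)
          ultimately have "(\<lambda>k. indicator (SS (U k)) x * H k (gg (U k) x)) \<longlonglongrightarrow> indicator (SS u) x * h (gg u x)"
            by (rule Lim_transform_eventually)
          then show False using nc by simp
        next
          case False
          then have "1 < norm (proj_perp u x) \<or> 1/2 < \<bar>x \<bullet> u\<bar>"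
            using n1 i1 i2 npos by (auto simp: SS_def abs_if)
          then have ev: "eventually (\<lambda>k. x \<notin> SS (U k)) sequentially"
          proof
            assume "1 < norm (proj_perp u x)"
            from order_tendstoD(1)[OF tn this] show ?thesis by eventually_elim (auto simp: SS_def)
          next
            assume "1/2 < \<bar>x \<bullet> u\<bar>"
            from order_tendstoD(1)[OF ti this] show ?thesis by eventually_elim (auto simp: SS_def)
          qed
          have "(\<lambda>k. 0::real) \<longlonglongrightarrow> indicator (SS u) x * h (gg u x)" using False by simp
          moreover have "eventually (\<lambda>k. 0 = indicator (SS (U k)) x * H k (gg (U k) x)) sequentially"
            using ev by eventually_elim (simp add: indicator_def)
          ultimately have "(\<lambda>k. indicator (SS (U k)) x * H k (gg (U k) x)) \<longlonglongrightarrow> indicator (SS u) x * h (gg u x)"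
            by (rule Lim_transform_eventually)
          then show False using nc by simp
        qed
      qed
    qed
  qed
  show ?thesis using tendsto_mult_left[OF lim, of "real (DIM('a) - 1)"]
    by (simp add: psm_integral)
qed



definition FF :: "(real \<Rightarrow> real \<Rightarrow> real) \<Rightarrow> ('a::euclidean_space \<Rightarrow> real) \<Rightarrow> 'a \<Rightarrow> 'a \<Rightarrow> real \<Rightarrow> real" where
  "FF Bk phi v vs \<theta> = indicator {0..pi} \<theta> * (Bk (norm (v - vs)) (cos \<theta>) * sin \<theta> ^ (DIM('a) - 2) *
      integral\<^sup>L (perp_sphere_measure (coll_dir v vs)) (Dp phi v vs (coll_dir v vs) \<theta>))"

lemma L_op_FF: "L_op Bk phi v vs = (\<integral>\<theta>. FF Bk phi v vs \<theta> \<partial>lborel)"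
  unfolding L_op_def set_lebesgue_integral_def FF_def Delta_phi_Dp by simp

lemma kernel_meas:
  assumes kB: "kernel_basic Bk" and r: "0 \<le> r"
  shows "(\<lambda>\<theta>. Bk r (cos \<theta>)) \<in> borel_measurable borel"
proof -
  have m: "(\<lambda>p. Bk (fst p) (snd p)) \<in> borel_measurable (restrict_space borel ({0..} \<times> {-1..1}))"
    using kB by (simp add: kernel_basic_def)
  have c: "(\<lambda>\<theta>::real. (r, cos \<theta>)) \<in> measurable borel (restrict_space borel ({0..} \<times> {-1..1}))"
  proof (rule measurable_restrict_space2)
    show "(\<lambda>\<theta>::real. (r, cos \<theta>)) \<in> space borel \<rightarrow> {0..} \<times> {-1..1}" using r by auto
    show "(\<lambda>\<theta>::real. (r, cos \<theta>)) \<in> borel_measurable borel"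
      by (intro borel_measurable_continuous_onI continuous_intros)
  qed
  show ?thesis using measurable_comp[OF c m] by (simp add: comp_def)
qed

lemma b_cos_meas:
  fixes b :: "real \<Rightarrow> real"
  assumes "b \<in> borel_measurable (restrict_space borel {-1..1})"
  shows "(\<lambda>\<theta>. b (cos \<theta>)) \<in> borel_measurable borel"
proof -
  have c: "(\<lambda>\<theta>::real. cos \<theta>) \<in> measurable borel (restrict_space borel {-1..1})"
    by (rule measurable_restrict_space2) (auto intro: borel_measurable_continuous_onI continuous_intros)
  show ?thesis using measurable_comp[OF c assms] by (simp add: comp_def)
qed

lemma JJ_cont_theta:
  fixes phi :: "'a::euclidean_space \<Rightarrow> real"
  assumes dim: "DIM('a) \<ge> 2" and cphi: "continuous_on UNIV phi" and u: "norm u = 1"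
  shows "continuous_on UNIV (\<lambda>\<theta>. integral\<^sup>L (perp_sphere_measure u) (Dp phi v vs u \<theta>))"
proof (rule continuous_on_sequentiallyI)
  fix TH :: "nat \<Rightarrow> real" and \<theta> assume TH: "TH \<longlonglongrightarrow> \<theta>"
  obtain M where M: "\<forall>z. norm z \<le> 2 * (norm v + norm vs) \<longrightarrow> \<bar>phi z\<bar> \<le> M"
    using cont_bounded[OF cphi] by blast
  show "(\<lambda>n. integral\<^sup>L (perp_sphere_measure u) (Dp phi v vs u (TH n))) \<longlonglongrightarrow> integral\<^sup>L (perp_sphere_measure u) (Dp phi v vs u \<theta>)"
  proof (rule psm_tendsto[OF dim tendsto_const u u])
    show "Dp phi v vs u (TH k) \<in> borel_measurable borel" for k by (rule Dp_meas[OF cphi])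
    show "Dp phi v vs u \<theta> \<in> borel_measurable borel" by (rule Dp_meas[OF cphi])
    show "\<bar>Dp phi v vs u (TH k) w\<bar> \<le> 4 * M" if "norm w = 1" for k w
      by (rule Dp_bound[OF M]) (use u that in auto)
    show "(\<lambda>k. Dp phi v vs u (TH k) (gg u x)) \<longlonglongrightarrow> Dp phi v vs u \<theta> (gg u x)" for x
      by (rule Dp_tendsto[OF cphi tendsto_const tendsto_const tendsto_const TH tendsto_const])
  qed
qed

lemma FF_meas:
  fixes phi :: "'a::euclidean_space \<Rightarrow> real"
  assumes dim: "DIM('a) \<ge> 2" and cphi: "continuous_on UNIV phi" and kB: "kernel_basic Bk"
  shows "FF Bk phi v vs \<in> borel_measurable borel"
proof -
  have "(\<lambda>\<theta>. integral\<^sup>L (perp_sphere_measure (coll_dir v vs)) (Dp phi v vs (coll_dir v vs) \<theta>)) \<in> borel_measurable borel"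
    by (rule borel_measurable_continuous_onI[OF JJ_cont_theta[OF dim cphi coll_dir_norm]])
  moreover note kernel_meas[OF kB norm_ge_zero, measurable]
  ultimately show ?thesis unfolding FF_def by measurable
qed

lemma W_integrable:
  assumes b_meas: "b \<in> borel_measurable (restrict_space borel {-1..1})"
    and b_nonneg: "\<forall>t\<in>{-1..1}. 0 \<le> b t"
    and H0: "(\<integral>\<^sup>+\<theta>\<in>{0..pi}. ennreal (b (cos \<theta>) * sin \<theta> ^ n) \<partial>lborel) < \<infinity>"
  shows "integrable lborel (\<lambda>\<theta>. indicator {0..pi} \<theta> * (b (cos \<theta>) * sin \<theta> ^ n))"
proof (rule integrableI_bounded)
  note b_cos_meas[OF b_meas, measurable]
  show "(\<lambda>\<theta>. indicator {0..pi} \<theta> * (b (cos \<theta>) * sin \<theta> ^ n)) \<in> borel_measurable lborel" by measurable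
  have "(\<integral>\<^sup>+ \<theta>. ennreal (norm (indicator {0..pi} \<theta> * (b (cos \<theta>) * sin \<theta> ^ n))) \<partial>lborel)
      = (\<integral>\<^sup>+\<theta>\<in>{0..pi}. ennreal (b (cos \<theta>) * sin \<theta> ^ n) \<partial>lborel)"
  proof (rule nn_integral_cong)
    fix \<theta> :: real
    show "ennreal (norm (indicator {0..pi} \<theta> * (b (cos \<theta>) * sin \<theta> ^ n))) = ennreal (b (cos \<theta>) * sin \<theta> ^ n) * indicator {0..pi} \<theta>"
    proof (cases "\<theta> \<in> {0..pi}")
      case True
      then have "0 \<le> sin \<theta>" by (auto intro: sin_ge_zero)
      moreover have "0 \<le> b (cos \<theta>)" using b_nonneg by auto
      ultimately show ?thesis using True by (simp add: abs_mult)
    qed simp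
  qed
  with H0 show "(\<integral>\<^sup>+ \<theta>. ennreal (norm (indicator {0..pi} \<theta> * (b (cos \<theta>) * sin \<theta> ^ n))) \<partial>lborel) < \<infinity>" by simp
qed


definition WW :: "(real \<Rightarrow> real) \<Rightarrow> nat \<Rightarrow> real \<Rightarrow> real" where
  "WW b n \<theta> = indicator {0..pi} \<theta> * (b (cos \<theta>) * sin \<theta> ^ n)"

lemma WW_nonneg: "\<forall>t\<in>{-1..1}. 0 \<le> b t \<Longrightarrow> 0 \<le> WW b n \<theta>"
  by (auto simp: WW_def indicator_def intro!: mult_nonneg_nonneg zero_le_power sin_ge_zero)

lemma cos_open: "0 < \<theta> \<Longrightarrow> \<theta> < pi \<Longrightarrow> cos \<theta> \<in> {-1<..<1}"
proof -
  assume "0 < \<theta>" "\<theta> < pi"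
  then have "0 < sin \<theta>" by (rule sin_gt_zero)
  then have "0 < (sin \<theta>)^2" by simp
  then have "(cos \<theta>)^2 < 1" using sin_cos_squared_add[of \<theta>] by linarith
  then show ?thesis by (simp add: abs_square_less_1 abs_less_iff)
qed

lemma FF_bound:
  fixes phi :: "'a::euclidean_space \<Rightarrow> real" and b :: "real \<Rightarrow> real"
  assumes dim: "DIM('a) \<ge> 2" and kB: "kernel_basic Bk"
    and Bkb: "\<forall>r\<ge>0. \<forall>t\<in>{-1<..<1}. Bk r t \<le> (1 + r\<^sup>2) powr (\<gamma>/2) * b t" and gamma: "0 < \<gamma>"
    and b_nonneg: "\<forall>t\<in>{-1..1}. 0 \<le> b t"
    and dphi: "\<forall>x. (phi has_derivative blinfun_apply (D x)) (at x)"
    and dD: "\<forall>x. (D has_derivative blinfun_apply (D2 x)) (at x)"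
    and K: "\<forall>z. norm z \<le> 2 * (norm v + norm vs) \<longrightarrow> norm (D2 z) \<le> K"
    and rho: "norm (v - vs) \<le> \<rho>"
  shows "AE \<theta> in lborel. \<bar>FF Bk phi v vs \<theta>\<bar> \<le> WW b DIM('a) \<theta> * ((1 + \<rho>\<^sup>2) powr (\<gamma>/2) * Cm TYPE('a) * 9 * K * norm (v - vs)^2)"
proof -
  have K0: "0 \<le> K" using K[rule_format, of 0] by simp (meson norm_ge_zero order_trans)
  have "AE \<theta> in lborel. \<theta> \<noteq> 0" "AE \<theta> in lborel. \<theta> \<noteq> pi" by (rule AE_lborel_singleton)+
  then show ?thesis
  proof eventually_elim
    fix \<theta> :: real assume \<theta>0: "\<theta> \<noteq> 0" "\<theta> \<noteq> pi"
    show "\<bar>FF Bk phi v vs \<theta>\<bar> \<le> WW b DIM('a) \<theta> * ((1 + \<rho>\<^sup>2) powr (\<gamma>/2) * Cm TYPE('a) * 9 * K * norm (v - vs)^2)"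
    proof (cases "\<theta> \<in> {0..pi}")
      case False
      then show ?thesis by (simp add: FF_def WW_def)
    next
      case True
      then have th: "0 < \<theta>" "\<theta> < pi" using \<theta>0 by auto
      define r where "r = norm (v - vs)"
      define c where "c = cos \<theta>"
      define s where "s = sin \<theta>"
      define J where "J = integral\<^sup>L (perp_sphere_measure (coll_dir v vs)) (Dp phi v vs (coll_dir v vs) \<theta>)"
      define P where "P = (1 + \<rho>\<^sup>2) powr (\<gamma>/2)"
      define n where "n = DIM('a) - 2"
      have P0: "0 \<le> P" by (simp add: P_def)
      have nN: "DIM('a) = n + 2" using dim by (simp add: n_def)
      have s0: "0 \<le> s" using th by (simp add: s_def sin_ge_zero)
      have c1: "c \<in> {-1<..<1}" unfolding c_def by (rule cos_open[OF th])
      have r0: "0 \<le> r" by (simp add: r_def)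
      have Bk0: "0 \<le> Bk r c" using kB r0 c1 by (auto simp: kernel_basic_def)
      have Bk1: "Bk r c \<le> (1 + r\<^sup>2) powr (\<gamma>/2) * b c" using Bkb r0 c1 by auto
      have Pm: "(1 + r\<^sup>2) powr (\<gamma>/2) \<le> P" unfolding P_def
        by (rule powr_mono2) (use gamma r0 rho in \<open>auto simp: r_def intro!: power_mono\<close>)
      have bc: "0 \<le> b c" using b_nonneg c1 by auto
      have J: "\<bar>J\<bar> \<le> Cm TYPE('a) * (9 * K * r^2 * s^2)"
        unfolding J_def r_def s_def by (rule JJ_bound[OF dphi dD K])
      have "\<bar>FF Bk phi v vs \<theta>\<bar> = Bk r c * s ^ n * \<bar>J\<bar>"
        using True Bk0 s0 by (simp add: FF_def r_def c_def s_def J_def n_def abs_mult)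
      also have "\<dots> \<le> (P * b c) * s ^ n * (Cm TYPE('a) * (9 * K * r^2 * s^2))"
      proof (intro mult_mono)
        show "Bk r c \<le> P * b c" using Bk1 mult_right_mono[OF Pm bc] by linarith
      qed (use J s0 bc Bk0 K0 P0 Cm_nonneg[where 'a='a] in \<open>auto intro!: mult_nonneg_nonneg\<close>)
      also have "\<dots> = (b c * s ^ (n + 2)) * (P * Cm TYPE('a) * 9 * K * r^2)"
        by (simp add: power_add power2_eq_square algebra_simps)
      also have "\<dots> = WW b DIM('a) \<theta> * (P * Cm TYPE('a) * 9 * K * r^2)"
        using True by (simp add: WW_def nN c_def s_def)
      finally show ?thesis by (simp add: P_def r_def)
    qed
  qed
qed

lemma L_bound:
  fixes phi :: "'a::euclidean_space \<Rightarrow> real" and b :: "real \<Rightarrow> real"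
  assumes dim: "DIM('a) \<ge> 2" and kB: "kernel_basic Bk"
    and Bkb: "\<forall>r\<ge>0. \<forall>t\<in>{-1<..<1}. Bk r t \<le> (1 + r\<^sup>2) powr (\<gamma>/2) * b t" and gamma: "0 < \<gamma>"
    and b_meas: "b \<in> borel_measurable (restrict_space borel {-1..1})"
    and b_nonneg: "\<forall>t\<in>{-1..1}. 0 \<le> b t"
    and H0: "(\<integral>\<^sup>+\<theta>\<in>{0..pi}. ennreal (b (cos \<theta>) * sin \<theta> ^ DIM('a)) \<partial>lborel) < \<infinity>"
    and dphi: "\<forall>x. (phi has_derivative blinfun_apply (D x)) (at x)"
    and dD: "\<forall>x. (D has_derivative blinfun_apply (D2 x)) (at x)"
    and K: "\<forall>z. norm z \<le> 2 * (norm v + norm vs) \<longrightarrow> norm (D2 z) \<le> K"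
    and rho: "norm (v - vs) \<le> \<rho>"
  shows "integrable lborel (FF Bk phi v vs)"
    and "\<bar>L_op Bk phi v vs\<bar> \<le> (\<integral>\<theta>. WW b DIM('a) \<theta> \<partial>lborel) * ((1 + \<rho>\<^sup>2) powr (\<gamma>/2) * Cm TYPE('a) * 9 * K * norm (v - vs)^2)"
proof -
  let ?c = "(1 + \<rho>\<^sup>2) powr (\<gamma>/2) * Cm TYPE('a) * 9 * K * norm (v - vs)^2"
  have K0: "0 \<le> K" using K[rule_format, of 0] by simp (meson norm_ge_zero order_trans)
  have c0: "0 \<le> ?c" using K0 Cm_nonneg[where 'a='a] by simp
  have W: "integrable lborel (WW b DIM('a))" unfolding WW_def by (rule W_integrable[OF b_meas b_nonneg H0])
  have Wc: "integrable lborel (\<lambda>\<theta>. WW b DIM('a) \<theta> * ?c)" by (rule integrable_mult_left[OF W])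
  have bd: "AE \<theta> in lborel. \<bar>FF Bk phi v vs \<theta>\<bar> \<le> WW b DIM('a) \<theta> * ?c"
    by (rule FF_bound[OF dim kB Bkb gamma b_nonneg dphi dD K rho])
  have fm: "FF Bk phi v vs \<in> borel_measurable borel" by (rule FF_meas[OF dim C2_cont[OF dphi] kB])
  have bd': "AE \<theta> in lborel. norm (FF Bk phi v vs \<theta>) \<le> norm (WW b DIM('a) \<theta> * ?c)"
    using bd by eventually_elim (use WW_nonneg[OF b_nonneg] c0 K0 Cm_nonneg[where 'a='a] in \<open>simp add: abs_mult\<close>)
  show int: "integrable lborel (FF Bk phi v vs)"
    by (rule Bochner_Integration.integrable_bound[OF Wc _ bd']) (use fm in simp)
  have "\<bar>L_op Bk phi v vs\<bar> \<le> (\<integral>\<theta>. \<bar>FF Bk phi v vs \<theta>\<bar> \<partial>lborel)"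
    unfolding L_op_FF using integral_norm_bound[of lborel "FF Bk phi v vs"] by simp
  also have "\<dots> \<le> (\<integral>\<theta>. WW b DIM('a) \<theta> * ?c \<partial>lborel)"
    by (rule integral_mono_AE'[OF Wc bd]) (use WW_nonneg[OF b_nonneg] c0 in simp)
  also have "\<dots> = (\<integral>\<theta>. WW b DIM('a) \<theta> \<partial>lborel) * ?c" by simp
  finally show "\<bar>L_op Bk phi v vs\<bar> \<le> (\<integral>\<theta>. WW b DIM('a) \<theta> \<partial>lborel) * ?c" .
qed



lemma Dp_diag: "Dp phi v v u \<theta> w = 0"
proof -
  have "(1/2) *\<^sub>R (v + v) = v" by (simp add: scaleR_2[symmetric])
  then show ?thesis by (simp add: Dp_def)
qed

lemma Dp_diag_fun: "Dp phi v v u \<theta> = (\<lambda>w. 0)"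
  by (rule ext) (rule Dp_diag)

lemma coll_dir_tendsto:
  assumes V: "V \<longlonglongrightarrow> v" and VS: "VS \<longlonglongrightarrow> vs" and ne: "v \<noteq> vs"
  shows "(\<lambda>k. coll_dir (V k) (VS k)) \<longlonglongrightarrow> coll_dir v vs"
proof -
  have d: "(\<lambda>k. V k - VS k) \<longlonglongrightarrow> v - vs" by (intro tendsto_intros V VS)
  have ev: "eventually (\<lambda>k. V k - VS k \<noteq> 0) sequentially"
    using tendsto_imp_eventually_ne[OF d, of 0] ne by simp
  have "(\<lambda>k. inverse (norm (V k - VS k)) *\<^sub>R (V k - VS k)) \<longlonglongrightarrow> inverse (norm (v - vs)) *\<^sub>R (v - vs)"
    using ne by (intro tendsto_intros d) simp
  then have "(\<lambda>k. (V k - VS k) /\<^sub>R norm (V k - VS k)) \<longlonglongrightarrow> coll_dir v vs"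
    using ne by (simp add: coll_dir_def)
  moreover have "eventually (\<lambda>k. (V k - VS k) /\<^sub>R norm (V k - VS k) = coll_dir (V k) (VS k)) sequentially"
    using ev by eventually_elim (simp add: coll_dir_def)
  ultimately show ?thesis by (rule Lim_transform_eventually)
qed

lemma gg_tendsto:
  assumes U: "U \<longlonglongrightarrow> u" and p: "proj_perp u x \<noteq> 0"
  shows "(\<lambda>k. gg (U k) x) \<longlonglongrightarrow> gg u x"
proof -
  have t: "(\<lambda>k. proj_perp (U k) x) \<longlonglongrightarrow> proj_perp u x" by (intro tendsto_intros U)
  have "(\<lambda>k. inverse (norm (proj_perp (U k) x)) *\<^sub>R proj_perp (U k) x) \<longlonglongrightarrow> inverse (norm (proj_perp u x)) *\<^sub>R proj_perp u x"
    using p by (intro tendsto_intros t) simp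
  then show ?thesis by (simp add: gg_def)
qed


lemma nfst: "norm (fst p) \<le> norm p" by (metis norm_fst_le prod.collapse)
lemma nsnd: "norm (snd p) \<le> norm p" by (metis norm_snd_le prod.collapse)

lemma part1:
  fixes phi :: "'a::euclidean_space \<Rightarrow> real" and b :: "real \<Rightarrow> real"
  assumes dim: "DIM('a) \<ge> 2" and kB: "kernel_basic Bb"
    and Bkb: "\<forall>r\<ge>0. \<forall>t\<in>{-1<..<1}. Bb r t \<le> (1 + r\<^sup>2) powr (\<gamma>/2) * b t" and gamma: "0 < \<gamma>"
    and b_meas: "b \<in> borel_measurable (restrict_space borel {-1..1})"
    and b_nonneg: "\<forall>t\<in>{-1..1}. 0 \<le> b t"
    and H0: "(\<integral>\<^sup>+\<theta>\<in>{0..pi}. ennreal (b (cos \<theta>) * sin \<theta> ^ DIM('a)) \<partial>lborel) < \<infinity>"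
    and C2: "C2_with phi D D2"
  shows "continuous_on UNIV (\<lambda>p. L_op Bb phi (fst p) (snd p))"
proof (rule continuous_on_sequentiallyI)
  have dphi: "\<forall>x. (phi has_derivative blinfun_apply (D x)) (at x)"
    and dD: "\<forall>x. (D has_derivative blinfun_apply (D2 x)) (at x)"
    and cD2: "continuous_on UNIV D2" using C2 by (auto simp: C2_with_def)
  have cphi: "continuous_on UNIV phi" by (rule C2_cont[OF dphi])
  fix P :: "nat \<Rightarrow> 'a \<times> 'a" and p assume P: "P \<longlonglongrightarrow> p"
  define V where "V = (\<lambda>k. fst (P k))"
  define VS where "VS = (\<lambda>k. snd (P k))"
  define v where "v = fst p"
  define vs where "vs = snd p"
  have V: "V \<longlonglongrightarrow> v" unfolding V_def v_def by (intro tendsto_intros P)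
  have VS: "VS \<longlonglongrightarrow> vs" unfolding VS_def vs_def by (intro tendsto_intros P)
  have "Bseq P" using P by (intro convergent_imp_Bseq convergentI)
  then obtain B1 where B1: "\<And>k. norm (P k) \<le> B1" by (auto simp: Bseq_def)
  define R0 where "R0 = 2 * B1 + 2 * norm p"
  have B10: "0 \<le> B1" using B1[of 0] norm_ge_zero[of "P 0"] by linarith
  have RV: "norm (V k) + norm (VS k) \<le> R0" for k
    using nfst[of "P k"] nsnd[of "P k"] B1[of k] norm_ge_zero[of p]
    unfolding V_def VS_def R0_def by linarith
  have Rv: "norm v + norm vs \<le> R0"
    using nfst[of p] nsnd[of p] B10 unfolding v_def vs_def R0_def by linarith
  obtain K2 where K2': "\<forall>z. norm z \<le> 2 * R0 \<longrightarrow> \<bar>norm (D2 z)\<bar> \<le> K2"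
    using cont_bounded[of "\<lambda>z. norm (D2 z)" "2 * R0"] cD2 by (auto intro: continuous_on_norm)
  have K2: "\<forall>z. norm z \<le> 2 * (norm (V k) + norm (VS k)) \<longrightarrow> norm (D2 z) \<le> K2" for k
    using K2' RV[of k] by force
  have K2v: "\<forall>z. norm z \<le> 2 * (norm v + norm vs) \<longrightarrow> norm (D2 z) \<le> K2"
    using K2' Rv by force
  have K20: "0 \<le> K2" using K2v[rule_format, of 0] by simp (meson norm_ge_zero order_trans)
  obtain M where M': "\<forall>z. norm z \<le> 2 * R0 \<longrightarrow> \<bar>phi z\<bar> \<le> M"
    using cont_bounded[OF cphi] by blast
  have M: "\<forall>z. norm z \<le> 2 * R0 \<longrightarrow> \<bar>phi z\<bar> \<le> M" by (rule M')
  have dR: "norm (V k - VS k) \<le> R0" for k using norm_triangle_ineq4[of "V k" "VS k"] RV[of k] by linarith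
  define c0 where "c0 = (1 + R0\<^sup>2) powr (\<gamma>/2) * Cm TYPE('a) * 9 * K2"
  have c00: "0 \<le> c0" using K20 Cm_nonneg[where 'a='a] by (simp add: c0_def)
  define Wi where "Wi = (\<integral>\<theta>. WW b DIM('a) \<theta> \<partial>lborel)"
  have Lk: "\<bar>L_op Bb phi (V k) (VS k)\<bar> \<le> Wi * (c0 * norm (V k - VS k)^2)" for k
    using L_bound(2)[OF dim kB Bkb gamma b_meas b_nonneg H0 dphi dD K2 dR] by (simp add: Wi_def c0_def ac_simps)
  have main: "(\<lambda>k. L_op Bb phi (V k) (VS k)) \<longlonglongrightarrow> L_op Bb phi v vs"
  proof (cases "v = vs")
    case True
    have "FF Bb phi v vs = (\<lambda>\<theta>. 0)" using True by (intro ext) (simp add: FF_def Dp_diag_fun)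
    then have "L_op Bb phi v vs = 0" unfolding L_op_FF by simp
    moreover have "(\<lambda>k. L_op Bb phi (V k) (VS k)) \<longlonglongrightarrow> 0"
    proof (rule Lim_null_comparison)
      show "\<forall>\<^sub>F k in sequentially. norm (L_op Bb phi (V k) (VS k)) \<le> Wi * (c0 * norm (V k - VS k)^2)"
        using Lk by simp
      have "(\<lambda>k. Wi * (c0 * norm (V k - VS k)^2)) \<longlonglongrightarrow> Wi * (c0 * norm (v - vs)^2)"
        by (intro tendsto_intros V VS)
      then show "(\<lambda>k. Wi * (c0 * norm (V k - VS k)^2)) \<longlonglongrightarrow> 0" using True by simp
    qed
    ultimately show ?thesis by simp
  next
    case False
    define u where "u = coll_dir v vs"
    define U where "U = (\<lambda>k. coll_dir (V k) (VS k))"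
    have U: "U \<longlonglongrightarrow> u" unfolding U_def u_def by (rule coll_dir_tendsto[OF V VS False])
    have W: "integrable lborel (WW b DIM('a))" unfolding WW_def by (rule W_integrable[OF b_meas b_nonneg H0])
    have lim: "(\<lambda>k. \<integral>\<theta>. FF Bb phi (V k) (VS k) \<theta> \<partial>lborel) \<longlonglongrightarrow> (\<integral>\<theta>. FF Bb phi v vs \<theta> \<partial>lborel)"
    proof (rule integral_dominated_convergence[OF _ _ integrable_mult_left[OF W, of "c0 * R0^2"]])
      show "FF Bb phi v vs \<in> borel_measurable lborel" using FF_meas[OF dim cphi kB] by simp
      show "FF Bb phi (V k) (VS k) \<in> borel_measurable lborel" for k using FF_meas[OF dim cphi kB] by simp
      show "AE \<theta> in lborel. norm (FF Bb phi (V k) (VS k) \<theta>) \<le> WW b DIM('a) \<theta> * (c0 * R0^2)" for k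
      proof -
        have "AE \<theta> in lborel. \<bar>FF Bb phi (V k) (VS k) \<theta>\<bar> \<le> WW b DIM('a) \<theta> * ((1 + R0\<^sup>2) powr (\<gamma>/2) * Cm TYPE('a) * 9 * K2 * norm (V k - VS k)^2)"
          by (rule FF_bound[OF dim kB Bkb gamma b_nonneg dphi dD K2 dR])
        then show ?thesis
        proof eventually_elim
          fix \<theta> assume a: "\<bar>FF Bb phi (V k) (VS k) \<theta>\<bar> \<le> WW b DIM('a) \<theta> * ((1 + R0\<^sup>2) powr (\<gamma>/2) * Cm TYPE('a) * 9 * K2 * norm (V k - VS k)^2)"
          have "norm (V k - VS k)^2 \<le> R0^2" using dR[of k] by (intro power_mono) auto
          then have "c0 * norm (V k - VS k)^2 \<le> c0 * R0^2" using c00 by (rule mult_left_mono)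
          then have "WW b DIM('a) \<theta> * (c0 * norm (V k - VS k)^2) \<le> WW b DIM('a) \<theta> * (c0 * R0^2)"
            using WW_nonneg[OF b_nonneg] by (rule mult_left_mono) 
          with a show "norm (FF Bb phi (V k) (VS k) \<theta>) \<le> WW b DIM('a) \<theta> * (c0 * R0^2)"
            by (simp add: c0_def ac_simps)
        qed
      qed
      have "AE \<theta> in lborel. \<theta> \<noteq> 0" "AE \<theta> in lborel. \<theta> \<noteq> pi" by (rule AE_lborel_singleton)+
      then show "AE \<theta> in lborel. (\<lambda>k. FF Bb phi (V k) (VS k) \<theta>) \<longlonglongrightarrow> FF Bb phi v vs \<theta>"
      proof eventually_elim
        fix \<theta> :: real assume \<theta>0: "\<theta> \<noteq> 0" "\<theta> \<noteq> pi"
        show "(\<lambda>k. FF Bb phi (V k) (VS k) \<theta>) \<longlonglongrightarrow> FF Bb phi v vs \<theta>"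
        proof (cases "\<theta> \<in> {0..pi}")
          case False
          then show ?thesis by (simp add: FF_def)
        next
          case True
          then have th: "0 < \<theta>" "\<theta> < pi" using \<theta>0 by auto
          have c1: "cos \<theta> \<in> {-1<..<1}" by (rule cos_open[OF th])
          have cB: "continuous_on {0..} (\<lambda>r. Bb r (cos \<theta>))" using kB c1 by (auto simp: kernel_basic_def)
          have nt: "(\<lambda>k. norm (V k - VS k)) \<longlonglongrightarrow> norm (v - vs)" by (intro tendsto_intros V VS)
          have tB: "(\<lambda>k. Bb (norm (V k - VS k)) (cos \<theta>)) \<longlonglongrightarrow> Bb (norm (v - vs)) (cos \<theta>)"
            using continuous_on_tendsto_compose[OF cB nt] by simp
          have tJ: "(\<lambda>k. integral\<^sup>L (perp_sphere_measure (U k)) (Dp phi (V k) (VS k) (U k) \<theta>))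
                \<longlonglongrightarrow> integral\<^sup>L (perp_sphere_measure u) (Dp phi v vs u \<theta>)"
          proof (rule psm_tendsto[OF dim U])
            show "norm u = 1" "\<And>k. norm (U k) = 1" by (simp_all add: u_def U_def coll_dir_norm)
            show "Dp phi (V k) (VS k) (U k) \<theta> \<in> borel_measurable borel" for k by (rule Dp_meas[OF cphi])
            show "Dp phi v vs u \<theta> \<in> borel_measurable borel" by (rule Dp_meas[OF cphi])
            show "\<bar>Dp phi (V k) (VS k) (U k) \<theta> w\<bar> \<le> 4 * M" if "norm w = 1" for k w
              by (rule Dp_bound[OF M]) (use RV[of k] that in \<open>auto simp: U_def coll_dir_norm\<close>)
            show "(\<lambda>k. Dp phi (V k) (VS k) (U k) \<theta> (gg (U k) x)) \<longlonglongrightarrow> Dp phi v vs u \<theta> (gg u x)"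
              if "proj_perp u x \<noteq> 0" for x
              by (rule Dp_tendsto[OF cphi V VS U tendsto_const gg_tendsto[OF U that]])
          qed
          show ?thesis unfolding FF_def U_def u_def
            by (intro tendsto_mult tendsto_const tB tJ[unfolded U_def u_def])
        qed
      qed
    qed
    then show ?thesis unfolding L_op_FF .
  qed
  then show "(\<lambda>n. L_op Bb phi (fst (P n)) (snd (P n))) \<longlonglongrightarrow> L_op Bb phi (fst p) (snd p)"
    by (simp add: V_def VS_def v_def vs_def)
qed



lemma deriv_sum2_bounds:
  fixes phi :: "'a::euclidean_space \<Rightarrow> real"
  shows "\<bar>phi v\<bar> \<le> deriv_sum2 phi D D2 v" "norm (D2 v) \<le> deriv_sum2 phi D D2 v"
proof -
  have s1: "0 \<le> (\<Sum>i\<in>Basis. \<bar>D v i\<bar>)" by (simp add: sum_nonneg)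
  have s2: "0 \<le> (\<Sum>i\<in>Basis. \<Sum>j\<in>Basis. \<bar>D2 v i j\<bar>)" by (simp add: sum_nonneg)
  show "\<bar>phi v\<bar> \<le> deriv_sum2 phi D D2 v" unfolding deriv_sum2_def using s1 s2 by linarith
  have "norm (D2 v) \<le> (\<Sum>i\<in>Basis. norm (D2 v i))" by (rule norm_blinfun_euclidean_le)
  also have "\<dots> \<le> (\<Sum>i\<in>Basis. \<Sum>j\<in>Basis. \<bar>D2 v i j\<bar>)"
  proof (rule sum_mono)
    fix i :: 'a assume "i \<in> Basis"
    show "norm (D2 v i) \<le> (\<Sum>j\<in>Basis. \<bar>D2 v i j\<bar>)"
      using norm_blinfun_euclidean_le[of "blinfun_apply (D2 v) i"] by simp
  qed
  finally show "norm (D2 v) \<le> deriv_sum2 phi D D2 v"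
    unfolding deriv_sum2_def using s1 abs_ge_zero[of "phi v"] by linarith
qed

lemma Bn_le:
  fixes Bn :: "nat \<Rightarrow> real \<Rightarrow> real \<Rightarrow> real" and Bb :: "real \<Rightarrow> real \<Rightarrow> real"
  assumes mono: "\<forall>r\<ge>0. \<forall>t\<in>{-1<..<1}. incseq (\<lambda>k. Bn k r t) \<and> (\<lambda>k. Bn k r t) \<longlonglongrightarrow> Bb r t"
    and "0 \<le> r" "t \<in> {-1<..<1}"
  shows "Bn k r t \<le> Bb r t"
proof -
  have "incseq (\<lambda>k. Bn k r t)" "(\<lambda>k. Bn k r t) \<longlonglongrightarrow> Bb r t" using mono assms(2,3) by auto
  then show ?thesis by (rule incseq_le)
qed

lemma part2b:
  fixes phi :: "'a::euclidean_space \<Rightarrow> real" and b :: "real \<Rightarrow> real"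
    and phin :: "nat \<Rightarrow> 'a \<Rightarrow> real"
  assumes dim: "DIM('a) \<ge> 2" and kB: "kernel_basic Bb"
    and Bkb: "\<forall>r\<ge>0. \<forall>t\<in>{-1<..<1}. Bb r t \<le> (1 + r\<^sup>2) powr (\<gamma>/2) * b t" and gamma: "0 < \<gamma>"
    and b_meas: "b \<in> borel_measurable (restrict_space borel {-1..1})"
    and b_nonneg: "\<forall>t\<in>{-1..1}. 0 \<le> b t"
    and H0: "(\<integral>\<^sup>+\<theta>\<in>{0..pi}. ennreal (b (cos \<theta>) * sin \<theta> ^ DIM('a)) \<partial>lborel) < \<infinity>"
    and kBn: "\<forall>k. kernel_basic (Bn k)"
    and mono: "\<forall>r\<ge>0. \<forall>t\<in>{-1<..<1}. incseq (\<lambda>k. Bn k r t) \<and> (\<lambda>k. Bn k r t) \<longlonglongrightarrow> Bb r t"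
    and C2: "C2_with phi D D2"
    and C2n: "\<forall>k. C2_with (phin k) (Dn k) (D2n k)"
    and conv: "\<forall>v. (\<lambda>k. phin k v) \<longlonglongrightarrow> phi v"
    and bnd: "\<forall>R. \<exists>C. \<forall>k v. norm v \<le> R \<longrightarrow> deriv_sum2 (phin k) (Dn k) (D2n k) v \<le> C"
  shows "(\<lambda>k. L_op (Bn k) (phin k) v vs) \<longlonglongrightarrow> L_op Bb phi v vs"
proof -
  have dphi: "\<forall>x. (phi has_derivative blinfun_apply (D x)) (at x)" using C2 by (auto simp: C2_with_def)
  have cphi: "continuous_on UNIV phi" by (rule C2_cont[OF dphi])
  have dphin: "\<forall>x. (phin k has_derivative blinfun_apply (Dn k x)) (at x)"
    and dDn: "\<forall>x. (Dn k has_derivative blinfun_apply (D2n k x)) (at x)" for k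
    using C2n by (auto simp: C2_with_def)
  have cphin: "continuous_on UNIV (phin k)" for k by (rule C2_cont[OF dphin])
  define R0 where "R0 = 2 * (norm v + norm vs)"
  obtain C where C: "\<And>k z. norm z \<le> R0 \<Longrightarrow> deriv_sum2 (phin k) (Dn k) (D2n k) z \<le> C"
    using bnd by blast
  have Kn: "\<forall>z. norm z \<le> 2 * (norm v + norm vs) \<longrightarrow> norm (D2n k z) \<le> C" for k
    using C deriv_sum2_bounds(2) unfolding R0_def by (meson order_trans)
  have Mn: "\<forall>z. norm z \<le> R0 \<longrightarrow> \<bar>phin k z\<bar> \<le> C" for k
    using C deriv_sum2_bounds(1) by (meson order_trans)
  have Bnb: "\<forall>r\<ge>0. \<forall>t\<in>{-1<..<1}. Bn k r t \<le> (1 + r\<^sup>2) powr (\<gamma>/2) * b t" for k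
    using Bkb Bn_le[OF mono] by (meson order_trans)
  define c where "c = (1 + (norm (v - vs))\<^sup>2) powr (\<gamma>/2) * Cm TYPE('a) * 9 * C * norm (v - vs)^2"
  have W: "integrable lborel (WW b DIM('a))" unfolding WW_def by (rule W_integrable[OF b_meas b_nonneg H0])
  have lim: "(\<lambda>k. \<integral>\<theta>. FF (Bn k) (phin k) v vs \<theta> \<partial>lborel) \<longlonglongrightarrow> (\<integral>\<theta>. FF Bb phi v vs \<theta> \<partial>lborel)"
  proof (rule integral_dominated_convergence[OF _ _ integrable_mult_left[OF W, of c]])
    show "FF Bb phi v vs \<in> borel_measurable lborel" using FF_meas[OF dim cphi kB] by simp
    show "FF (Bn k) (phin k) v vs \<in> borel_measurable lborel" for k
      using FF_meas[OF dim cphin kBn[rule_format]] by simp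
    show "AE \<theta> in lborel. norm (FF (Bn k) (phin k) v vs \<theta>) \<le> WW b DIM('a) \<theta> * c" for k
      using FF_bound[OF dim kBn[rule_format] Bnb gamma b_nonneg dphin dDn Kn order_refl]
      by (simp add: c_def)
    have "AE \<theta> in lborel. \<theta> \<noteq> 0" "AE \<theta> in lborel. \<theta> \<noteq> pi" by (rule AE_lborel_singleton)+
    then show "AE \<theta> in lborel. (\<lambda>k. FF (Bn k) (phin k) v vs \<theta>) \<longlonglongrightarrow> FF Bb phi v vs \<theta>"
    proof eventually_elim
      fix \<theta> :: real assume \<theta>0: "\<theta> \<noteq> 0" "\<theta> \<noteq> pi"
      show "(\<lambda>k. FF (Bn k) (phin k) v vs \<theta>) \<longlonglongrightarrow> FF Bb phi v vs \<theta>"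
      proof (cases "\<theta> \<in> {0..pi}")
        case False
        then show ?thesis by (simp add: FF_def)
      next
        case True
        then have th: "0 < \<theta>" "\<theta> < pi" using \<theta>0 by auto
        have c1: "cos \<theta> \<in> {-1<..<1}" by (rule cos_open[OF th])
        have tB: "(\<lambda>k. Bn k (norm (v - vs)) (cos \<theta>)) \<longlonglongrightarrow> Bb (norm (v - vs)) (cos \<theta>)"
          using mono c1 by auto
        define u where "u = coll_dir v vs"
        have u: "norm u = 1" by (simp add: u_def coll_dir_norm)
        have tJ: "(\<lambda>k. integral\<^sup>L (perp_sphere_measure u) (Dp (phin k) v vs u \<theta>))
                \<longlonglongrightarrow> integral\<^sup>L (perp_sphere_measure u) (Dp phi v vs u \<theta>)"
        proof (rule psm_tendsto[OF dim tendsto_const u u])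
          show "Dp (phin k) v vs u \<theta> \<in> borel_measurable borel" for k by (rule Dp_meas[OF cphin])
          show "Dp phi v vs u \<theta> \<in> borel_measurable borel" by (rule Dp_meas[OF cphi])
          show "\<bar>Dp (phin k) v vs u \<theta> w\<bar> \<le> 4 * C" if "norm w = 1" for k w
            by (rule Dp_bound[OF Mn]) (use u that in \<open>auto simp: R0_def\<close>)
          show "(\<lambda>k. Dp (phin k) v vs u \<theta> (gg u x)) \<longlonglongrightarrow> Dp phi v vs u \<theta> (gg u x)" for x
            unfolding Dp_def Let_def using conv by (intro tendsto_intros) auto
        qed
        show ?thesis unfolding FF_def u_def[symmetric]
          by (intro tendsto_mult tendsto_const tB tJ)
      qed
    qed
  qed
  then show ?thesis unfolding L_op_FF .
qed



lemma dini:
  fixes G :: "nat \<Rightarrow> real \<Rightarrow> real"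
  assumes S: "compact S" and cont: "\<And>k. continuous_on S (G k)"
    and dec: "\<And>k r. r \<in> S \<Longrightarrow> G (Suc k) r \<le> G k r" and lim: "\<And>r. r \<in> S \<Longrightarrow> (\<lambda>k. G k r) \<longlonglongrightarrow> 0"
    and e: "0 < e"
  shows "\<exists>N. \<forall>k\<ge>N. \<forall>r\<in>S. G k r < e"
proof (rule ccontr)
  assume "\<not> (\<exists>N. \<forall>k\<ge>N. \<forall>r\<in>S. G k r < e)"
  then have nn: "\<forall>N. \<exists>k\<ge>N. \<exists>r\<in>S. e \<le> G k r" by (auto simp: not_less)
  have mono: "G k r \<le> G m r" if "m \<le> k" "r \<in> S" for m k r
  proof -
    have "decseq (\<lambda>k. G k r)" using dec[OF that(2)] by (simp add: decseq_Suc_iff)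
    then show ?thesis using that(1) by (rule decseqD)
  qed
  have "\<forall>n. \<exists>r. r \<in> S \<and> e \<le> G n r"
  proof
    fix n
    obtain k r where "k \<ge> n" "r \<in> S" "e \<le> G k r" using nn by blast
    then show "\<exists>r. r \<in> S \<and> e \<le> G n r" using mono[of n k r] by auto
  qed
  then obtain rr where rr: "\<And>n. rr n \<in> S" "\<And>n. e \<le> G n (rr n)" by metis
  obtain l \<sigma> where l: "l \<in> S" "strict_mono \<sigma>" "(rr \<circ> \<sigma>) \<longlonglongrightarrow> l"
    using seq_compactE[OF compact_imp_seq_compact[OF S], of rr] rr(1) by blast
  have ge: "e \<le> G m l" for m
  proof -
    have t: "(\<lambda>j. G m ((rr \<circ> \<sigma>) j)) \<longlonglongrightarrow> G m l"
      using continuous_on_tendsto_compose[OF cont l(3) l(1)] rr(1) by simp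
    show ?thesis
    proof (rule LIMSEQ_le_const[OF t], intro exI allI impI)
      fix j assume "m \<le> j"
      then have "m \<le> \<sigma> j" using seq_suble[OF l(2), of j] by simp
      then have "G (\<sigma> j) (rr (\<sigma> j)) \<le> G m (rr (\<sigma> j))" using mono rr(1) by blast
      then show "e \<le> G m ((rr \<circ> \<sigma>) j)" using rr(2)[of "\<sigma> j"] by simp
    qed
  qed
  have "e \<le> 0" by (rule LIMSEQ_le_const[OF lim[OF l(1)]]) (use ge in auto)
  then show False using e by simp
qed


definition gD :: "(real \<Rightarrow> real \<Rightarrow> real) \<Rightarrow> (nat \<Rightarrow> real \<Rightarrow> real \<Rightarrow> real) \<Rightarrow> nat \<Rightarrow> nat \<Rightarrow> real \<Rightarrow> real \<Rightarrow> real" where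
  "gD Bb Bn n k r \<theta> = indicator {0..pi} \<theta> * ((Bb r (cos \<theta>) - Bn k r (cos \<theta>)) * sin \<theta> ^ n)"

context
  fixes Bb :: "real \<Rightarrow> real \<Rightarrow> real" and Bn :: "nat \<Rightarrow> real \<Rightarrow> real \<Rightarrow> real"
    and b :: "real \<Rightarrow> real" and \<gamma> :: real and n :: nat
  assumes kB: "kernel_basic Bb" and kBn: "\<forall>k. kernel_basic (Bn k)"
    and Bkb: "\<forall>r\<ge>0. \<forall>t\<in>{-1<..<1}. Bb r t \<le> (1 + r\<^sup>2) powr (\<gamma>/2) * b t" and gamma: "0 < \<gamma>"
    and b_meas: "b \<in> borel_measurable (restrict_space borel {-1..1})"
    and b_nonneg: "\<forall>t\<in>{-1..1}. 0 \<le> b t"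
    and H0: "(\<integral>\<^sup>+\<theta>\<in>{0..pi}. ennreal (b (cos \<theta>) * sin \<theta> ^ n) \<partial>lborel) < \<infinity>"
    and mono: "\<forall>r\<ge>0. \<forall>t\<in>{-1<..<1}. incseq (\<lambda>k. Bn k r t) \<and> (\<lambda>k. Bn k r t) \<longlonglongrightarrow> Bb r t"
begin

lemma gD_meas: "0 \<le> r \<Longrightarrow> gD Bb Bn n k r \<in> borel_measurable borel"
  unfolding gD_def using kernel_meas[OF kB] kernel_meas[OF kBn[rule_format]] by measurable

lemma WWn_int: "integrable lborel (WW b n)"
  unfolding WW_def by (rule W_integrable[OF b_meas b_nonneg H0])

lemma gD_bd:
  assumes r: "0 \<le> r"
  shows "AE \<theta> in lborel. 0 \<le> gD Bb Bn n k r \<theta> \<and> gD Bb Bn n k r \<theta> \<le> (1 + r\<^sup>2) powr (\<gamma>/2) * WW b n \<theta>"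
proof -
  have "AE \<theta> in lborel. \<theta> \<noteq> 0" "AE \<theta> in lborel. \<theta> \<noteq> pi" by (rule AE_lborel_singleton)+
  then show ?thesis
  proof eventually_elim
    fix \<theta> :: real assume \<theta>0: "\<theta> \<noteq> 0" "\<theta> \<noteq> pi"
    show "0 \<le> gD Bb Bn n k r \<theta> \<and> gD Bb Bn n k r \<theta> \<le> (1 + r\<^sup>2) powr (\<gamma>/2) * WW b n \<theta>"
    proof (cases "\<theta> \<in> {0..pi}")
      case False then show ?thesis by (simp add: gD_def WW_def)
    next
      case True
      then have th: "0 < \<theta>" "\<theta> < pi" using \<theta>0 by auto
      have c1: "cos \<theta> \<in> {-1<..<1}" by (rule cos_open[OF th])
      have s0: "0 \<le> sin \<theta> ^ n" using th by (simp add: sin_ge_zero)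
      have le: "Bn k r (cos \<theta>) \<le> Bb r (cos \<theta>)" by (rule Bn_le[OF mono r c1])
      have n0: "0 \<le> Bn k r (cos \<theta>)" using kBn r c1 by (auto simp: kernel_basic_def)
      have bb: "Bb r (cos \<theta>) \<le> (1 + r\<^sup>2) powr (\<gamma>/2) * b (cos \<theta>)" using Bkb r c1 by auto
      have "(Bb r (cos \<theta>) - Bn k r (cos \<theta>)) * sin \<theta> ^ n \<le> ((1 + r\<^sup>2) powr (\<gamma>/2) * b (cos \<theta>)) * sin \<theta> ^ n"
        using le n0 bb s0 by (intro mult_right_mono) auto
      then show ?thesis using True le s0 by (simp add: gD_def WW_def ac_simps)
    qed
  qed
qed

lemma gD_int: "0 \<le> r \<Longrightarrow> integrable lborel (gD Bb Bn n k r)"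
proof -
  assume r: "0 \<le> r"
  show ?thesis
  proof (rule Bochner_Integration.integrable_bound[OF integrable_mult_right[OF WWn_int, of "(1 + r\<^sup>2) powr (\<gamma>/2)"]])
    show "gD Bb Bn n k r \<in> borel_measurable lborel" using gD_meas[OF r] by simp
    show "AE \<theta> in lborel. norm (gD Bb Bn n k r \<theta>) \<le> norm ((1 + r\<^sup>2) powr (\<gamma>/2) * WW b n \<theta>)"
      using gD_bd[OF r, of k] by eventually_elim (use WW_nonneg[OF b_nonneg] in \<open>auto simp: abs_mult\<close>)
  qed
qed

lemma G_nonneg: "0 \<le> r \<Longrightarrow> 0 \<le> (\<integral>\<theta>. gD Bb Bn n k r \<theta> \<partial>lborel)"
  by (rule integral_nonneg_AE) (use gD_bd in \<open>auto elim!: AE_mp\<close>)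

lemma G_dec: "0 \<le> r \<Longrightarrow> (\<integral>\<theta>. gD Bb Bn n (Suc k) r \<theta> \<partial>lborel) \<le> (\<integral>\<theta>. gD Bb Bn n k r \<theta> \<partial>lborel)"
proof -
  assume r: "0 \<le> r"
  show ?thesis
  proof (rule integral_mono_AE[OF gD_int[OF r] gD_int[OF r]])
    have "AE \<theta> in lborel. \<theta> \<noteq> 0" "AE \<theta> in lborel. \<theta> \<noteq> pi" by (rule AE_lborel_singleton)+
    then show "AE \<theta> in lborel. gD Bb Bn n (Suc k) r \<theta> \<le> gD Bb Bn n k r \<theta>"
    proof eventually_elim
      fix \<theta> :: real assume \<theta>0: "\<theta> \<noteq> 0" "\<theta> \<noteq> pi"
      show "gD Bb Bn n (Suc k) r \<theta> \<le> gD Bb Bn n k r \<theta>"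
      proof (cases "\<theta> \<in> {0..pi}")
        case False then show ?thesis by (simp add: gD_def)
      next
        case True
        then have th: "0 < \<theta>" "\<theta> < pi" using \<theta>0 by auto
        have c1: "cos \<theta> \<in> {-1<..<1}" by (rule cos_open[OF th])
        have s0: "0 \<le> sin \<theta> ^ n" using th by (simp add: sin_ge_zero)
        have "incseq (\<lambda>k. Bn k r (cos \<theta>))" using mono r c1 by auto
        then have "Bn k r (cos \<theta>) \<le> Bn (Suc k) r (cos \<theta>)" by (rule incseq_SucD)
        then show ?thesis using True s0 by (simp add: gD_def mult_right_mono)
      qed
    qed
  qed
qed

lemma G_lim: "0 \<le> r \<Longrightarrow> (\<lambda>k. \<integral>\<theta>. gD Bb Bn n k r \<theta> \<partial>lborel) \<longlonglongrightarrow> 0"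
proof -
  assume r: "0 \<le> r"
  define f where "f = (\<lambda>\<theta>::real. indicator {0..pi} \<theta> * ((Bb r (cos \<theta>) - Bb r (cos \<theta>)) * sin \<theta> ^ n))"
  have f0: "f = (\<lambda>\<theta>. 0)" by (simp add: f_def)
  have "(\<lambda>k. \<integral>\<theta>. gD Bb Bn n k r \<theta> \<partial>lborel) \<longlonglongrightarrow> (\<integral>\<theta>. f \<theta> \<partial>lborel)"
  proof (rule integral_dominated_convergence[OF _ _ integrable_mult_right[OF WWn_int, of "(1 + r\<^sup>2) powr (\<gamma>/2)"]])
    show "f \<in> borel_measurable lborel" by (simp add: f0)
    show "gD Bb Bn n k r \<in> borel_measurable lborel" for k using gD_meas[OF r] by simp
    show "AE \<theta> in lborel. norm (gD Bb Bn n k r \<theta>) \<le> (1 + r\<^sup>2) powr (\<gamma>/2) * WW b n \<theta>" for k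
      using gD_bd[OF r, of k] by eventually_elim auto
    have "AE \<theta> in lborel. \<theta> \<noteq> 0" "AE \<theta> in lborel. \<theta> \<noteq> pi" by (rule AE_lborel_singleton)+
    then show "AE \<theta> in lborel. (\<lambda>k. gD Bb Bn n k r \<theta>) \<longlonglongrightarrow> f \<theta>"
    proof eventually_elim
      fix \<theta> :: real assume \<theta>0: "\<theta> \<noteq> 0" "\<theta> \<noteq> pi"
      show "(\<lambda>k. gD Bb Bn n k r \<theta>) \<longlonglongrightarrow> f \<theta>"
      proof (cases "\<theta> \<in> {0..pi}")
        case False then show ?thesis by (simp add: gD_def f_def)
      next
        case True
        then have th: "0 < \<theta>" "\<theta> < pi" using \<theta>0 by auto
        have c1: "cos \<theta> \<in> {-1<..<1}" by (rule cos_open[OF th])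
        have "(\<lambda>k. Bn k r (cos \<theta>)) \<longlonglongrightarrow> Bb r (cos \<theta>)" using mono r c1 by auto
        then show ?thesis unfolding gD_def f_def by (intro tendsto_intros)
      qed
    qed
  qed
  then show ?thesis by (simp add: f0)
qed

lemma G_cont: "continuous_on {0..R} (\<lambda>r. \<integral>\<theta>. gD Bb Bn n k r \<theta> \<partial>lborel)"
proof (rule continuous_on_sequentiallyI)
  fix rr :: "nat \<Rightarrow> real" and r assume rr: "\<forall>j. rr j \<in> {0..R}" and r: "r \<in> {0..R}" and lim: "rr \<longlonglongrightarrow> r"
  show "(\<lambda>j. \<integral>\<theta>. gD Bb Bn n k (rr j) \<theta> \<partial>lborel) \<longlonglongrightarrow> (\<integral>\<theta>. gD Bb Bn n k r \<theta> \<partial>lborel)"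
  proof (rule integral_dominated_convergence[OF _ _ integrable_mult_right[OF WWn_int, of "(1 + R\<^sup>2) powr (\<gamma>/2)"]])
    show "gD Bb Bn n k r \<in> borel_measurable lborel" using gD_meas r by simp
    show "gD Bb Bn n k (rr j) \<in> borel_measurable lborel" for j using gD_meas rr by simp
    show "AE \<theta> in lborel. norm (gD Bb Bn n k (rr j) \<theta>) \<le> (1 + R\<^sup>2) powr (\<gamma>/2) * WW b n \<theta>" for j
    proof -
      have r0: "0 \<le> rr j" "rr j \<le> R" using rr by auto
      have P: "(1 + (rr j)\<^sup>2) powr (\<gamma>/2) \<le> (1 + R\<^sup>2) powr (\<gamma>/2)"
        by (rule powr_mono2) (use gamma r0 in \<open>auto intro!: power_mono\<close>)
      show ?thesis using gD_bd[OF r0(1), of k]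
      proof eventually_elim
        fix \<theta> assume a: "0 \<le> gD Bb Bn n k (rr j) \<theta> \<and> gD Bb Bn n k (rr j) \<theta> \<le> (1 + (rr j)\<^sup>2) powr (\<gamma>/2) * WW b n \<theta>"
        have "(1 + (rr j)\<^sup>2) powr (\<gamma>/2) * WW b n \<theta> \<le> (1 + R\<^sup>2) powr (\<gamma>/2) * WW b n \<theta>"
          using P WW_nonneg[OF b_nonneg] by (rule mult_right_mono)
        then show "norm (gD Bb Bn n k (rr j) \<theta>) \<le> (1 + R\<^sup>2) powr (\<gamma>/2) * WW b n \<theta>" using a by simp
      qed
    qed
    have "AE \<theta> in lborel. \<theta> \<noteq> 0" "AE \<theta> in lborel. \<theta> \<noteq> pi" by (rule AE_lborel_singleton)+
    then show "AE \<theta> in lborel. (\<lambda>j. gD Bb Bn n k (rr j) \<theta>) \<longlonglongrightarrow> gD Bb Bn n k r \<theta>"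
    proof eventually_elim
      fix \<theta> :: real assume \<theta>0: "\<theta> \<noteq> 0" "\<theta> \<noteq> pi"
      show "(\<lambda>j. gD Bb Bn n k (rr j) \<theta>) \<longlonglongrightarrow> gD Bb Bn n k r \<theta>"
      proof (cases "\<theta> \<in> {0..pi}")
        case False then show ?thesis by (simp add: gD_def)
      next
        case True
        then have th: "0 < \<theta>" "\<theta> < pi" using \<theta>0 by auto
        have c1: "cos \<theta> \<in> {-1<..<1}" by (rule cos_open[OF th])
        have cB: "continuous_on {0..} (\<lambda>r. Bb r (cos \<theta>))" using kB c1 by (auto simp: kernel_basic_def)
        have cBn: "continuous_on {0..} (\<lambda>r. Bn k r (cos \<theta>))" using kBn c1 by (auto simp: kernel_basic_def)
        have r0: "r \<in> {0..}" using r by auto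
        have ev: "eventually (\<lambda>j. rr j \<in> {0..}) sequentially" using rr by auto
        have t1: "(\<lambda>j. Bb (rr j) (cos \<theta>)) \<longlonglongrightarrow> Bb r (cos \<theta>)"
          using continuous_on_tendsto_compose[OF cB lim r0 ev] by simp
        have t2: "(\<lambda>j. Bn k (rr j) (cos \<theta>)) \<longlonglongrightarrow> Bn k r (cos \<theta>)"
          using continuous_on_tendsto_compose[OF cBn lim r0 ev] by simp
        show ?thesis unfolding gD_def by (intro tendsto_intros t1 t2)
      qed
    qed
  qed
qed

lemma G_unif:
  assumes e: "0 < e"
  shows "\<exists>N. \<forall>k\<ge>N. \<forall>r\<in>{0..R}. (\<integral>\<theta>. gD Bb Bn n k r \<theta> \<partial>lborel) < e"
  by (rule dini[OF compact_Icc G_cont _ _ e]) (auto intro: G_dec G_lim)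

end



lemma diff_bound:
  fixes phi :: "'a::euclidean_space \<Rightarrow> real" and b :: "real \<Rightarrow> real" and Bn :: "nat \<Rightarrow> real \<Rightarrow> real \<Rightarrow> real"
    and Bb :: "real \<Rightarrow> real \<Rightarrow> real"
  assumes dim: "DIM('a) \<ge> 2" and kB: "kernel_basic Bb" and kBn: "\<forall>k. kernel_basic (Bn k)"
    and Bkb: "\<forall>r\<ge>0. \<forall>t\<in>{-1<..<1}. Bb r t \<le> (1 + r\<^sup>2) powr (\<gamma>/2) * b t" and gamma: "0 < \<gamma>"
    and b_meas: "b \<in> borel_measurable (restrict_space borel {-1..1})"
    and b_nonneg: "\<forall>t\<in>{-1..1}. 0 \<le> b t"
    and H0: "(\<integral>\<^sup>+\<theta>\<in>{0..pi}. ennreal (b (cos \<theta>) * sin \<theta> ^ DIM('a)) \<partial>lborel) < \<infinity>"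
    and mono: "\<forall>r\<ge>0. \<forall>t\<in>{-1<..<1}. incseq (\<lambda>k. Bn k r t) \<and> (\<lambda>k. Bn k r t) \<longlonglongrightarrow> Bb r t"
    and dphi: "\<forall>x. (phi has_derivative blinfun_apply (D x)) (at x)"
    and dD: "\<forall>x. (D has_derivative blinfun_apply (D2 x)) (at x)"
    and K: "\<forall>z. norm z \<le> 2 * (norm v + norm vs) \<longrightarrow> norm (D2 z) \<le> K"
    and rho: "norm (v - vs) \<le> \<rho>"
  shows "\<bar>L_op (Bn k) phi v vs - L_op Bb phi v vs\<bar>
           \<le> (Cm TYPE('a) * 9 * K * \<rho>^2) * (\<integral>\<theta>. gD Bb Bn DIM('a) k (norm (v - vs)) \<theta> \<partial>lborel)"
proof -
  have Bnb: "\<forall>r\<ge>0. \<forall>t\<in>{-1<..<1}. Bn k r t \<le> (1 + r\<^sup>2) powr (\<gamma>/2) * b t"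
    using Bkb Bn_le[OF mono] by (meson order_trans)
  have K0: "0 \<le> K" using K[rule_format, of 0] by simp (meson norm_ge_zero order_trans)
  define cK where "cK = Cm TYPE('a) * 9 * K * \<rho>^2"
  have cK0: "0 \<le> cK" using K0 Cm_nonneg[where 'a='a] by (simp add: cK_def)
  define r where "r = norm (v - vs)"
  have r0: "0 \<le> r" by (simp add: r_def)
  have i1: "integrable lborel (FF (Bn k) phi v vs)"
    by (rule L_bound(1)[OF dim kBn[rule_format] Bnb gamma b_meas b_nonneg H0 dphi dD K order_refl])
  have i2: "integrable lborel (FF Bb phi v vs)"
    by (rule L_bound(1)[OF dim kB Bkb gamma b_meas b_nonneg H0 dphi dD K order_refl])
  have ig: "integrable lborel (\<lambda>\<theta>. cK * gD Bb Bn DIM('a) k r \<theta>)"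
    by (rule integrable_mult_right[OF gD_int[OF kB kBn Bkb gamma b_meas b_nonneg H0 mono r0]])
  have gbd: "AE \<theta> in lborel. 0 \<le> gD Bb Bn DIM('a) k r \<theta> \<and> gD Bb Bn DIM('a) k r \<theta> \<le> (1 + r\<^sup>2) powr (\<gamma>/2) * WW b DIM('a) \<theta>"
    by (rule gD_bd[OF kB kBn Bkb gamma b_meas b_nonneg H0 mono r0])
  have "L_op (Bn k) phi v vs - L_op Bb phi v vs = (\<integral>\<theta>. FF (Bn k) phi v vs \<theta> - FF Bb phi v vs \<theta> \<partial>lborel)"
    unfolding L_op_FF using i1 i2 by simp
  also have "\<bar>\<dots>\<bar> \<le> (\<integral>\<theta>. \<bar>FF (Bn k) phi v vs \<theta> - FF Bb phi v vs \<theta>\<bar> \<partial>lborel)"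
    using integral_norm_bound[of lborel "\<lambda>\<theta>. FF (Bn k) phi v vs \<theta> - FF Bb phi v vs \<theta>"] by simp
  also have "\<dots> \<le> (\<integral>\<theta>. cK * gD Bb Bn DIM('a) k r \<theta> \<partial>lborel)"
  proof (rule integral_mono_AE'[OF ig])
    show "AE \<theta> in lborel. 0 \<le> cK * gD Bb Bn DIM('a) k r \<theta>"
      using gbd by eventually_elim (use cK0 in simp)
    have "AE \<theta> in lborel. \<theta> \<noteq> 0" "AE \<theta> in lborel. \<theta> \<noteq> pi" by (rule AE_lborel_singleton)+
    then show "AE \<theta> in lborel. \<bar>FF (Bn k) phi v vs \<theta> - FF Bb phi v vs \<theta>\<bar> \<le> cK * gD Bb Bn DIM('a) k r \<theta>"
    proof eventually_elim
      fix \<theta> :: real assume \<theta>0: "\<theta> \<noteq> 0" "\<theta> \<noteq> pi"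
      show "\<bar>FF (Bn k) phi v vs \<theta> - FF Bb phi v vs \<theta>\<bar> \<le> cK * gD Bb Bn DIM('a) k r \<theta>"
      proof (cases "\<theta> \<in> {0..pi}")
        case False then show ?thesis by (simp add: FF_def gD_def)
      next
        case True
        then have th: "0 < \<theta>" "\<theta> < pi" using \<theta>0 by auto
        define c where "c = cos \<theta>"
        define s where "s = sin \<theta>"
        define J where "J = integral\<^sup>L (perp_sphere_measure (coll_dir v vs)) (Dp phi v vs (coll_dir v vs) \<theta>)"
        define m where "m = DIM('a) - 2"
        have nN: "DIM('a) = m + 2" using dim by (simp add: m_def)
        have s0: "0 \<le> s" using th by (simp add: s_def sin_ge_zero)
        have c1: "c \<in> {-1<..<1}" unfolding c_def by (rule cos_open[OF th])
        have le: "Bn k r c \<le> Bb r c" by (rule Bn_le[OF mono r0 c1])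
        have J: "\<bar>J\<bar> \<le> Cm TYPE('a) * (9 * K * r^2 * s^2)"
          unfolding J_def r_def s_def by (rule JJ_bound[OF dphi dD K])
        have J': "\<bar>J\<bar> \<le> Cm TYPE('a) * (9 * K * \<rho>^2 * s^2)"
        proof -
          have "r^2 \<le> \<rho>^2" using rho r0 by (simp add: r_def power_mono)
          then have "9 * K * r^2 * s^2 \<le> 9 * K * \<rho>^2 * s^2" using K0 by (simp add: mult_left_mono mult_right_mono)
          then show ?thesis using J Cm_nonneg[where 'a='a] by (meson mult_left_mono order_trans)
        qed
        have "\<bar>FF (Bn k) phi v vs \<theta> - FF Bb phi v vs \<theta>\<bar> = (Bb r c - Bn k r c) * s ^ m * \<bar>J\<bar>"
        proof -
          have "FF (Bn k) phi v vs \<theta> - FF Bb phi v vs \<theta> = - ((Bb r c - Bn k r c) * s ^ m * J)"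
            using True by (simp add: FF_def r_def c_def s_def J_def m_def algebra_simps)
          then show ?thesis using le s0 by (simp add: abs_mult)
        qed
        also have "\<dots> \<le> (Bb r c - Bn k r c) * s ^ m * (Cm TYPE('a) * (9 * K * \<rho>^2 * s^2))"
          using J' le s0 by (intro mult_left_mono) auto
        also have "\<dots> = cK * ((Bb r c - Bn k r c) * s ^ (m + 2))"
          by (simp add: cK_def power_add power2_eq_square algebra_simps)
        also have "\<dots> = cK * gD Bb Bn DIM('a) k r \<theta>"
          using True by (simp add: gD_def nN c_def s_def)
        finally show ?thesis .
      qed
    qed
  qed
  also have "\<dots> = cK * (\<integral>\<theta>. gD Bb Bn DIM('a) k r \<theta> \<partial>lborel)" by simp
  finally show ?thesis by (simp add: cK_def r_def)
qed


lemma part2a: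
  fixes phi :: "'a::euclidean_space \<Rightarrow> real" and b :: "real \<Rightarrow> real" and Bn :: "nat \<Rightarrow> real \<Rightarrow> real \<Rightarrow> real"
    and Bb :: "real \<Rightarrow> real \<Rightarrow> real"
  assumes dim: "DIM('a) \<ge> 2" and kB: "kernel_basic Bb" and kBn: "\<forall>k. kernel_basic (Bn k)"
    and Bkb: "\<forall>r\<ge>0. \<forall>t\<in>{-1<..<1}. Bb r t \<le> (1 + r\<^sup>2) powr (\<gamma>/2) * b t" and gamma: "0 < \<gamma>"
    and b_meas: "b \<in> borel_measurable (restrict_space borel {-1..1})"
    and b_nonneg: "\<forall>t\<in>{-1..1}. 0 \<le> b t"
    and H0: "(\<integral>\<^sup>+\<theta>\<in>{0..pi}. ennreal (b (cos \<theta>) * sin \<theta> ^ DIM('a)) \<partial>lborel) < \<infinity>"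
    and mono: "\<forall>r\<ge>0. \<forall>t\<in>{-1<..<1}. incseq (\<lambda>k. Bn k r t) \<and> (\<lambda>k. Bn k r t) \<longlonglongrightarrow> Bb r t"
    and C2: "C2_with phi D D2" and R: "0 < R"
  shows "(\<lambda>k. SUP p \<in> {p::'a \<times> 'a. norm (fst p) + norm (snd p) \<le> R}.
                     \<bar>L_op (Bn k) phi (fst p) (snd p) - L_op Bb phi (fst p) (snd p)\<bar>) \<longlonglongrightarrow> 0"
proof -
  have dphi: "\<forall>x. (phi has_derivative blinfun_apply (D x)) (at x)"
    and dD: "\<forall>x. (D has_derivative blinfun_apply (D2 x)) (at x)"
    and cD2: "continuous_on UNIV D2" using C2 by (auto simp: C2_with_def)
  define PP where "PP = {p::'a \<times> 'a. norm (fst p) + norm (snd p) \<le> R}"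
  define X where "X = (\<lambda>p k. \<bar>L_op (Bn k) phi (fst p) (snd p) - L_op Bb phi (fst p) (snd p)\<bar>)"
  obtain K where K': "\<forall>z. norm z \<le> 2 * R \<longrightarrow> \<bar>norm (D2 z)\<bar> \<le> K"
    using cont_bounded[of "\<lambda>z. norm (D2 z)" "2 * R"] cD2 by (auto intro: continuous_on_norm)
  have KP: "\<forall>z. norm z \<le> 2 * (norm (fst p) + norm (snd p)) \<longrightarrow> norm (D2 z) \<le> K" if "p \<in> PP" for p
    using K' that by (force simp: PP_def)
  have K0: "0 \<le> K" using K'[rule_format, of 0] R by simp (meson norm_ge_zero order_trans)
  have dR: "norm (fst p - snd p) \<le> R" if "p \<in> PP" for p
    using that norm_triangle_ineq4[of "fst p" "snd p"] by (auto simp: PP_def)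
  define cK where "cK = Cm TYPE('a) * 9 * K * R^2"
  have cK0: "0 \<le> cK" using K0 Cm_nonneg[where 'a='a] by (simp add: cK_def)
  have Bnb: "\<forall>r\<ge>0. \<forall>t\<in>{-1<..<1}. Bn k r t \<le> (1 + r\<^sup>2) powr (\<gamma>/2) * b t" for k
    using Bkb Bn_le[OF mono] by (meson order_trans)
  define Wi where "Wi = (\<integral>\<theta>. WW b DIM('a) \<theta> \<partial>lborel)"
  define Bd where "Bd = 2 * (Wi * ((1 + R\<^sup>2) powr (\<gamma>/2) * Cm TYPE('a) * 9 * K * R^2))"
  have Xbd: "X p k \<le> Bd" if "p \<in> PP" for p k
  proof -
    have "norm (fst p - snd p)^2 \<le> R^2" using dR[OF that] by (intro power_mono) auto
    have Wi0: "0 \<le> Wi" unfolding Wi_def by (rule integral_nonneg_AE) (use WW_nonneg[OF b_nonneg] in auto)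
    have a: "\<bar>L_op (Bn k) phi (fst p) (snd p)\<bar> \<le> Wi * ((1 + R\<^sup>2) powr (\<gamma>/2) * Cm TYPE('a) * 9 * K * norm (fst p - snd p)^2)"
      using L_bound(2)[OF dim kBn[rule_format] Bnb gamma b_meas b_nonneg H0 dphi dD KP[OF that] dR[OF that]] by (simp add: Wi_def)
    have b: "\<bar>L_op Bb phi (fst p) (snd p)\<bar> \<le> Wi * ((1 + R\<^sup>2) powr (\<gamma>/2) * Cm TYPE('a) * 9 * K * norm (fst p - snd p)^2)"
      using L_bound(2)[OF dim kB Bkb gamma b_meas b_nonneg H0 dphi dD KP[OF that] dR[OF that]] by (simp add: Wi_def)
    have "Wi * ((1 + R\<^sup>2) powr (\<gamma>/2) * Cm TYPE('a) * 9 * K * norm (fst p - snd p)^2)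
         \<le> Wi * ((1 + R\<^sup>2) powr (\<gamma>/2) * Cm TYPE('a) * 9 * K * R^2)"
      using \<open>norm (fst p - snd p)^2 \<le> R^2\<close> Wi0 K0 Cm_nonneg[where 'a='a]
      by (intro mult_left_mono) auto
    then show ?thesis using a b unfolding X_def Bd_def by linarith
  qed
  have p0: "(0, 0) \<in> PP" using R by (simp add: PP_def)
  have bdd: "bdd_above ((\<lambda>p. X p k) ` PP)" for k by (rule bdd_aboveI2[OF Xbd])
  have main: "(\<lambda>k. SUP p\<in>PP. X p k) \<longlonglongrightarrow> 0"
  proof (rule LIMSEQ_I)
    fix r :: real assume r: "0 < r"
    define e where "e = r / (2 * (cK + 1))"
    have e: "0 < e" using r cK0 by (simp add: e_def)
    obtain N where N: "\<forall>k\<ge>N. \<forall>\<rho>\<in>{0..R}. (\<integral>\<theta>. gD Bb Bn DIM('a) k \<rho> \<theta> \<partial>lborel) < e"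
      using G_unif[OF kB kBn Bkb gamma b_meas b_nonneg H0 mono e] by blast
    have "norm ((SUP p\<in>PP. X p k) - 0) < r" if k: "k \<ge> N" for k
    proof -
      have up: "X p k \<le> cK * e" if p: "p \<in> PP" for p
      proof -
        have "X p k \<le> cK * (\<integral>\<theta>. gD Bb Bn DIM('a) k (norm (fst p - snd p)) \<theta> \<partial>lborel)"
          unfolding X_def cK_def
          by (rule diff_bound[OF dim kB kBn Bkb gamma b_meas b_nonneg H0 mono dphi dD KP[OF p] dR[OF p]])
        also have "\<dots> \<le> cK * e"
          using N k dR[OF p] cK0 by (intro mult_left_mono) (auto intro: less_imp_le)
        finally show ?thesis .
      qed
      have s1: "(SUP p\<in>PP. X p k) \<le> cK * e" using p0 up by (intro cSUP_least) auto
      have s0: "0 \<le> (SUP p\<in>PP. X p k)"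
        using cSUP_upper[OF p0 bdd[of k]] by (simp add: X_def)
      have "cK * e < r"
      proof -
        have "cK * e = r * (cK / (2 * (cK + 1)))" by (simp add: e_def)
        also have "cK / (2 * (cK + 1)) < 1" using cK0 by (simp add: field_simps)
        then have "r * (cK / (2 * (cK + 1))) < r * 1" using r by (intro mult_strict_left_mono) auto
        finally show ?thesis by simp
      qed
      then show ?thesis using s0 s1 by simp
    qed
    then show "\<exists>no. \<forall>k\<ge>no. norm ((SUP p\<in>PP. X p k) - 0) < r" by blast
  qed
  then show ?thesis by (simp add: PP_def X_def)
qed



theorem proposition2p1:
  fixes Bb :: "real \<Rightarrow> real \<Rightarrow> real" and b :: "real \<Rightarrow> real" and \<gamma> :: real
  assumes dim: "DIM('a::euclidean_space) \<ge> 2"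
    and kB: "kernel_basic Bb"
    and gamma: "0 < \<gamma>" "\<gamma> \<le> 2"
    and b_meas: "b \<in> borel_measurable (restrict_space borel {-1..1})"
    and b_nonneg: "\<forall>t\<in>{-1..1}. 0 \<le> b t"
    and B_bound: "\<forall>r\<ge>0. \<forall>t\<in>{-1..1}. Bb r t \<le> (1 + r\<^sup>2) powr (\<gamma>/2) * b t"
    and H0: "(\<integral>\<^sup>+\<theta>\<in>{0..pi}. ennreal (b (cos \<theta>) * sin \<theta> ^ DIM('a)) \<partial>lborel) < \<infinity>"
  shows
    "(\<forall>(phi::'a \<Rightarrow> real) D D2. C2_with phi D D2 \<longrightarrow>
        continuous_on UNIV (\<lambda>p. L_op Bb phi (fst p) (snd p)))
     \<and>
     (\<forall>Bn :: nat \<Rightarrow> real \<Rightarrow> real \<Rightarrow> real.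
        (\<forall>k. kernel_basic (Bn k)) \<and>
        (\<forall>r\<ge>0. \<forall>t\<in>{-1<..<1}. incseq (\<lambda>k. Bn k r t) \<and> (\<lambda>k. Bn k r t) \<longlonglongrightarrow> Bb r t)
        \<longrightarrow>
        (\<forall>(phi::'a \<Rightarrow> real) D D2. C2_with phi D D2 \<longrightarrow>
           (\<forall>R. 0 < R \<longrightarrow>
              (\<lambda>k. SUP p \<in> {p::'a \<times> 'a. norm (fst p) + norm (snd p) \<le> R}.
                     \<bar>L_op (Bn k) phi (fst p) (snd p) - L_op Bb phi (fst p) (snd p)\<bar>)
              \<longlonglongrightarrow> 0)
           \<and>
           (\<forall>(phin :: nat \<Rightarrow> 'a \<Rightarrow> real) Dn D2n.
              (\<forall>k. C2_with (phin k) (Dn k) (D2n k)) \<and>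
              (\<forall>v. (\<lambda>k. phin k v) \<longlonglongrightarrow> phi v) \<and>
              (\<forall>R. \<exists>C. \<forall>k v. norm v \<le> R \<longrightarrow> deriv_sum2 (phin k) (Dn k) (D2n k) v \<le> C)
              \<longrightarrow>
              (\<forall>v vs. (\<lambda>k. L_op (Bn k) (phin k) v vs) \<longlonglongrightarrow> L_op Bb phi v vs))))"
proof -
  have Bkb: "\<forall>r\<ge>0. \<forall>t\<in>{-1<..<1}. Bb r t \<le> (1 + r\<^sup>2) powr (\<gamma>/2) * b t" using B_bound by auto
  have P1: "\<forall>(phi::'a \<Rightarrow> real) D D2. C2_with phi D D2 \<longrightarrow>
        continuous_on UNIV (\<lambda>p. L_op Bb phi (fst p) (snd p))"
    using part1[OF dim kB Bkb gamma(1) b_meas b_nonneg H0] by blast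
  have P2: "\<forall>Bn :: nat \<Rightarrow> real \<Rightarrow> real \<Rightarrow> real.
        (\<forall>k. kernel_basic (Bn k)) \<and>
        (\<forall>r\<ge>0. \<forall>t\<in>{-1<..<1}. incseq (\<lambda>k. Bn k r t) \<and> (\<lambda>k. Bn k r t) \<longlonglongrightarrow> Bb r t)
        \<longrightarrow>
        (\<forall>(phi::'a \<Rightarrow> real) D D2. C2_with phi D D2 \<longrightarrow>
           (\<forall>R. 0 < R \<longrightarrow>
              (\<lambda>k. SUP p \<in> {p::'a \<times> 'a. norm (fst p) + norm (snd p) \<le> R}.
                     \<bar>L_op (Bn k) phi (fst p) (snd p) - L_op Bb phi (fst p) (snd p)\<bar>)
              \<longlonglongrightarrow> 0)
           \<and>
           (\<forall>(phin :: nat \<Rightarrow> 'a \<Rightarrow> real) Dn D2n.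
              (\<forall>k. C2_with (phin k) (Dn k) (D2n k)) \<and>
              (\<forall>v. (\<lambda>k. phin k v) \<longlonglongrightarrow> phi v) \<and>
              (\<forall>R. \<exists>C. \<forall>k v. norm v \<le> R \<longrightarrow> deriv_sum2 (phin k) (Dn k) (D2n k) v \<le> C)
              \<longrightarrow>
              (\<forall>v vs. (\<lambda>k. L_op (Bn k) (phin k) v vs) \<longlonglongrightarrow> L_op Bb phi v vs)))"
  proof (intro allI impI)
    fix Bn :: "nat \<Rightarrow> real \<Rightarrow> real \<Rightarrow> real" and phi :: "'a \<Rightarrow> real" and D D2
    assume A: "(\<forall>k. kernel_basic (Bn k)) \<and>
        (\<forall>r\<ge>0. \<forall>t\<in>{-1<..<1}. incseq (\<lambda>k. Bn k r t) \<and> (\<lambda>k. Bn k r t) \<longlonglongrightarrow> Bb r t)"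
      and C2: "C2_with phi D D2"
    have kBn: "\<forall>k. kernel_basic (Bn k)" and mono: "\<forall>r\<ge>0. \<forall>t\<in>{-1<..<1}. incseq (\<lambda>k. Bn k r t) \<and> (\<lambda>k. Bn k r t) \<longlonglongrightarrow> Bb r t"
      using A by auto
    show "(\<forall>R. 0 < R \<longrightarrow>
              (\<lambda>k. SUP p \<in> {p::'a \<times> 'a. norm (fst p) + norm (snd p) \<le> R}.
                     \<bar>L_op (Bn k) phi (fst p) (snd p) - L_op Bb phi (fst p) (snd p)\<bar>)
              \<longlonglongrightarrow> 0)
           \<and>
           (\<forall>(phin :: nat \<Rightarrow> 'a \<Rightarrow> real) Dn D2n.
              (\<forall>k. C2_with (phin k) (Dn k) (D2n k)) \<and>
              (\<forall>v. (\<lambda>k. phin k v) \<longlonglongrightarrow> phi v) \<and>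
              (\<forall>R. \<exists>C. \<forall>k v. norm v \<le> R \<longrightarrow> deriv_sum2 (phin k) (Dn k) (D2n k) v \<le> C)
              \<longrightarrow>
              (\<forall>v vs. (\<lambda>k. L_op (Bn k) (phin k) v vs) \<longlonglongrightarrow> L_op Bb phi v vs))"
    proof (intro conjI allI impI)
      fix R :: real assume R: "0 < R"
      show "(\<lambda>k. SUP p \<in> {p::'a \<times> 'a. norm (fst p) + norm (snd p) \<le> R}.
                     \<bar>L_op (Bn k) phi (fst p) (snd p) - L_op Bb phi (fst p) (snd p)\<bar>) \<longlonglongrightarrow> 0"
        by (rule part2a[OF dim kB kBn Bkb gamma(1) b_meas b_nonneg H0 mono C2 R])
    next
      fix phin :: "nat \<Rightarrow> 'a \<Rightarrow> real" and Dn D2n v vs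
      assume B: "(\<forall>k. C2_with (phin k) (Dn k) (D2n k)) \<and>
              (\<forall>v. (\<lambda>k. phin k v) \<longlonglongrightarrow> phi v) \<and>
              (\<forall>R. \<exists>C. \<forall>k v. norm v \<le> R \<longrightarrow> deriv_sum2 (phin k) (Dn k) (D2n k) v \<le> C)"
      show "(\<lambda>k. L_op (Bn k) (phin k) v vs) \<longlonglongrightarrow> L_op Bb phi v vs"
        using B by (intro part2b[OF dim kB Bkb gamma(1) b_meas b_nonneg H0 kBn mono C2]) auto
    qed
  qed
  show ?thesis using P1 P2 by blast
qed


end
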